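(* Let $\rho_{AB}$ be a two-qubit state and let $\mathcal T$ be its correlation matrix, $\mathcal T_{ij}=\mathrm{Tr}[\rho_{AB}\,\sigma_i\otimes\sigma_j]$, $i,j\in\{1,2,3\}$, with singular values $\tau_1\ge\tau_2\ge\tau_3\ge0$. If $\rho_{AB}$ is non-steerable, then $$R_G(\tau_3^2,\tau_2^2,\tau_1^2)\le\tfrac12 .$$
   Context: $\sigma_1,\sigma_2,\sigma_3$ are the Pauli matrices. $R_G$ is the symmetric elliptic integral (DLMF 19.16.3), which can be written as $R_G(a,b,c)=\frac{1}{4\pi}\int_0^{2\pi}\int_0^{\pi}\sqrt{a\sin^2\theta\cos^2\phi+b\sin^2\theta\sin^2\phi+c\cos^2\theta}\;\sin\theta\,d\theta\,d\phi$. "Non-steerable" is in the standard sense of EPR steering (the state admits a local hidden state model, so one party cannot steer the other). *)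

theory Defs
  imports "HOL-Probability.Probability"
begin

type_synonym cmat2 = "complex ^ 2 ^ 2"
type_synonym cmat4 = "complex ^ (2 \<times> 2) ^ (2 \<times> 2)"

definition psd :: "complex ^ 'n ^ 'n \<Rightarrow> bool" where
  "psd A \<longleftrightarrow> (\<forall>v :: complex ^ 'n.
      Im (\<Sum>i\<in>UNIV. \<Sum>j\<in>UNIV. cnj (v $ i) * A $ i $ j * v $ j) = 0 \<and>
      0 \<le> Re (\<Sum>i\<in>UNIV. \<Sum>j\<in>UNIV. cnj (v $ i) * A $ i $ j * v $ j))"

definition density_matrix :: "complex ^ 'n ^ 'n \<Rightarrow> bool" where
  "density_matrix A \<longleftrightarrow> psd A \<and> trace A = 1"

definition kron :: "cmat2 \<Rightarrow> cmat2 \<Rightarrow> cmat4" where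
  "kron A B = (\<chi> r c. A $ fst r $ fst c * B $ snd r $ snd c)"

definition ptrace_A :: "cmat4 \<Rightarrow> cmat2" where
  "ptrace_A X = (\<chi> k l. \<Sum>i\<in>UNIV. X $ (i, k) $ (i, l))"

definition sigma1 :: cmat2 where
  "sigma1 = (\<chi> i j. if i = j then 0 else 1)"
definition sigma2 :: cmat2 where
  "sigma2 = (\<chi> i j. if i = j then 0 else if i = 0 then - \<i> else \<i>)"
definition sigma3 :: cmat2 where
  "sigma3 = (\<chi> i j. if i \<noteq> j then 0 else if i = 0 then 1 else -1)"

definition pauli :: "3 \<Rightarrow> cmat2" where
  "pauli i = (if i = 0 then sigma1 else if i = 1 then sigma2 else sigma3)"

text \<open>Correlation matrix T_ij = Tr[rho (sigma_i (x) sigma_j)] (real for Hermitian rho).\<close>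
definition corr_matrix :: "cmat4 \<Rightarrow> real ^ 3 ^ 3" where
  "corr_matrix \<rho> = (\<chi> i j. Re (trace (\<rho> ** kron (pauli i) (pauli j))))"

text \<open>t1 >= t2 >= t3 >= 0 are the singular values of T (with multiplicity), i.e. their
  squares are the eigenvalues of T^T T counted via the characteristic polynomial.\<close>
definition singular_values3 :: "real ^ 3 ^ 3 \<Rightarrow> real \<Rightarrow> real \<Rightarrow> real \<Rightarrow> bool" where
  "singular_values3 T t1 t2 t3 \<longleftrightarrow> t1 \<ge> t2 \<and> t2 \<ge> t3 \<and> t3 \<ge> 0 \<and>
     (\<forall>x::real. det (mat x - transpose T ** T) = (x - t1^2) * (x - t2^2) * (x - t3^2))"

text \<open>Symmetric elliptic integral R_G (DLMF 19.16.3), in the integral form given.\<close>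
definition R_G :: "real \<Rightarrow> real \<Rightarrow> real \<Rightarrow> real" where
  "R_G a b c = 1 / (4 * pi) * integral (cbox (0, 0) (2 * pi, pi))
     (\<lambda>(\<phi>, \<theta>). sqrt (a * (sin \<theta>)^2 * (cos \<phi>)^2 + b * (sin \<theta>)^2 * (sin \<phi>)^2
                        + c * (cos \<theta>)^2) * sin \<theta>)"

definition povm :: "nat \<Rightarrow> (nat \<Rightarrow> cmat2) \<Rightarrow> bool" where
  "povm n M \<longleftrightarrow> n \<ge> 1 \<and> (\<forall>a<n. psd (M a)) \<and> (\<Sum>a<n. M a) = mat 1"

definition assemblage :: "cmat4 \<Rightarrow> (nat \<Rightarrow> cmat2) \<Rightarrow> nat \<Rightarrow> cmat2" where
  "assemblage \<rho> M a = ptrace_A (kron (M a) (mat 1) ** \<rho>)"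

text \<open>Local hidden state model for steering from A to B: hidden variable lambda
  distributed by the probability measure mu, hidden states S lambda of Bob, response
  functions p n M a lambda = p(a | M, lambda), for every POVM (n, M) of Alice.\<close>
definition lhs_model :: "'l measure \<Rightarrow> ('l \<Rightarrow> cmat2) \<Rightarrow>
    (nat \<Rightarrow> (nat \<Rightarrow> cmat2) \<Rightarrow> nat \<Rightarrow> 'l \<Rightarrow> real) \<Rightarrow> cmat4 \<Rightarrow> bool" where
  "lhs_model \<mu> S p \<rho> \<longleftrightarrow> prob_space \<mu> \<and> S \<in> borel_measurable \<mu> \<and>
     (\<forall>l\<in>space \<mu>. density_matrix (S l)) \<and>
     (\<forall>n M. povm n M \<longrightarrow>
        (\<forall>l\<in>space \<mu>. (\<forall>a<n. 0 \<le> p n M a l) \<and> (\<Sum>a<n. p n M a l) = 1) \<and>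
        (\<forall>a<n. p n M a \<in> borel_measurable \<mu> \<and>
               has_bochner_integral \<mu> (\<lambda>l. p n M a l *\<^sub>R S l) (assemblage \<rho> M a)))"

end

theory Submission imports Defs begin

definition dz :: "real \<Rightarrow> real \<Rightarrow> real \<Rightarrow> real \<Rightarrow> real \<Rightarrow> real" where
  "dz c1 c2 c3 \<phi> \<theta> = c1 * sin \<theta> * cos \<phi> + c2 * sin \<theta> * sin \<phi> + c3 * cos \<theta>"

lemma cont_dz[continuous_intros]:
  fixes f g :: "'a::t2_space \<Rightarrow> real"
  assumes "continuous_on S f" "continuous_on S g"
  shows "continuous_on S (\<lambda>x. dz c1 c2 c3 (f x) (g x))"
  unfolding dz_def by (intro continuous_intros assms)

lemma cont_dz2[continuous_intros]:
  fixes f g a b c :: "'a::t2_space \<Rightarrow> real"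
  assumes "continuous_on S f" "continuous_on S g" "continuous_on S a" "continuous_on S b" "continuous_on S c"
  shows "continuous_on S (\<lambda>x. dz (a x) (b x) (c x) (f x) (g x))"
  unfolding dz_def by (intro continuous_intros assms)

lemma FTC0:
  fixes F :: "real \<Rightarrow> real"
  assumes "a \<le> b" "\<And>x. x \<in> {a..b} \<Longrightarrow> (F has_real_derivative f x) (at x)"
    and "F a = 0" "F b = 0"
  shows "integral {a..b} f = 0"
proof -
  have "(f has_integral (F b - F a)) {a..b}"
    by (rule fundamental_theorem_of_calculus[OF assms(1)])
       (use assms(2) in \<open>auto simp: has_real_derivative_iff_has_vector_derivative[symmetric] intro: has_field_derivative_at_within\<close>)
  then show ?thesis using assms by (simp add: integral_unique)
qed

lemma Zxz:
  assumes e: "\<epsilon> > 0"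
  shows "integral (cbox (0,0) (2 * pi,pi)) (\<lambda>t. dz c1 c2 c3 (fst t) (snd t) * dz (-c3) 0 c1 (fst t) (snd t)
           / sqrt ((dz c1 c2 c3 (fst t) (snd t))\<^sup>2 + \<epsilon>) * sin (snd t)) = 0"
proof -
  define D where "D \<phi> \<theta> = dz c1 c2 c3 \<phi> \<theta>" for \<phi> \<theta>
  define H where "H \<phi> \<theta> = sqrt ((D \<phi> \<theta>)\<^sup>2 + \<epsilon>)" for \<phi> \<theta>
  have Hpos: "H \<phi> \<theta> > 0" for \<phi> \<theta> unfolding H_def using e by (simp add: add_nonneg_pos)
  define Pd where "Pd \<phi> \<theta> = cos \<phi> * cos \<theta> * H \<phi> \<theta> + cos \<phi> * sin \<theta> *
     (D \<phi> \<theta> * (c1 * cos \<theta> * cos \<phi> + c2 * cos \<theta> * sin \<phi> - c3 * sin \<theta>) / H \<phi> \<theta>)" for \<phi> \<theta>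
  define Qd where "Qd \<phi> \<theta> = cos \<theta> * cos \<phi> * H \<phi> \<theta> + cos \<theta> * sin \<phi> *
     (D \<phi> \<theta> * (- c1 * sin \<theta> * sin \<phi> + c2 * sin \<theta> * cos \<phi>) / H \<phi> \<theta>)" for \<phi> \<theta>
  have contD: "continuous_on S (\<lambda>t. D (fst t) (snd t))" for S
    unfolding D_def by (intro continuous_intros)
  have contH: "continuous_on S (\<lambda>t. H (fst t) (snd t))" for S
    unfolding H_def by (intro continuous_intros contD)
  have contH': "continuous_on S (\<lambda>t. inverse (H (fst t) (snd t)))" for S
    using Hpos by (intro continuous_intros contH) (auto simp: less_le)
  have contP: "continuous_on S (\<lambda>t. Pd (fst t) (snd t))" for S
    unfolding Pd_def divide_inverse by (intro continuous_intros contH contH' contD)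
  have contQ: "continuous_on S (\<lambda>t. Qd (fst t) (snd t))" for S
    unfolding Qd_def divide_inverse by (intro continuous_intros contH contH' contD)
  have eq: "dz c1 c2 c3 \<phi> \<theta> * dz (-c3) 0 c1 \<phi> \<theta> / sqrt ((dz c1 c2 c3 \<phi> \<theta>)\<^sup>2 + \<epsilon>) * sin \<theta>
      = Pd \<phi> \<theta> - Qd \<phi> \<theta>" for \<phi> \<theta>
  proof -
    have s: "sin \<phi> ^ 2 = 1 - cos \<phi> ^ 2" by (simp add: sin_squared_eq)
    show ?thesis
      unfolding Pd_def Qd_def H_def[symmetric] D_def[symmetric]
      using Hpos[of \<phi> \<theta>]
      apply (simp add: field_simps dz_def D_def power2_eq_square)
      using sin_cos_squared_add[of \<phi>] by algebra
  qed
  have dD\<theta>: "((\<lambda>\<theta>. D \<phi> \<theta>) has_real_derivative (c1 * cos \<theta> * cos \<phi> + c2 * cos \<theta> * sin \<phi> - c3 * sin \<theta>)) (at \<theta>)" for \<phi> \<theta>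
    unfolding D_def dz_def by (auto intro!: derivative_eq_intros)
  have dD\<phi>: "((\<lambda>\<phi>. D \<phi> \<theta>) has_real_derivative (- c1 * sin \<theta> * sin \<phi> + c2 * sin \<theta> * cos \<phi>)) (at \<phi>)" for \<phi> \<theta>
    unfolding D_def dz_def by (auto intro!: derivative_eq_intros)
  have P0: "integral {0..pi} (\<lambda>\<theta>. Pd \<phi> \<theta>) = 0" for \<phi>
  proof (rule FTC0[where F="\<lambda>\<theta>. cos \<phi> * sin \<theta> * H \<phi> \<theta>"])
    fix \<theta>
    show "((\<lambda>\<theta>. cos \<phi> * sin \<theta> * H \<phi> \<theta>) has_real_derivative Pd \<phi> \<theta>) (at \<theta>)"
      unfolding H_def using Hpos[of \<phi> \<theta>]
      by (auto intro!: derivative_eq_intros dD\<theta> simp: Pd_def H_def field_simps power2_eq_square)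
  qed auto
  have Q0: "integral {0..2 * pi} (\<lambda>\<phi>. Qd \<phi> \<theta>) = 0" for \<theta>
  proof (rule FTC0[where F="\<lambda>\<phi>. cos \<theta> * sin \<phi> * H \<phi> \<theta>"])
    fix \<phi>
    show "((\<lambda>\<phi>. cos \<theta> * sin \<phi> * H \<phi> \<theta>) has_real_derivative Qd \<phi> \<theta>) (at \<phi>)"
      unfolding H_def using Hpos[of \<phi> \<theta>]
      by (auto intro!: derivative_eq_intros dD\<phi> simp: Qd_def H_def field_simps power2_eq_square)
  qed auto
  have "integral (cbox (0,0) (2*pi,pi)) (\<lambda>t. dz c1 c2 c3 (fst t) (snd t) * dz (-c3) 0 c1 (fst t) (snd t)
           / sqrt ((dz c1 c2 c3 (fst t) (snd t))\<^sup>2 + \<epsilon>) * sin (snd t))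
     = integral (cbox (0,0) (2*pi,pi)) (\<lambda>t. Pd (fst t) (snd t) - Qd (fst t) (snd t))"
    by (rule integral_cong) (rule eq)
  also have "\<dots> = integral (cbox (0,0) (2*pi,pi)) (\<lambda>t. Pd (fst t) (snd t))
        - integral (cbox (0,0) (2*pi,pi)) (\<lambda>t. Qd (fst t) (snd t))"
    by (rule integral_diff; rule integrable_continuous; rule contP contQ)
  also have "integral (cbox (0,0) (2*pi,pi)) (\<lambda>t. Pd (fst t) (snd t)) = 0"
    using integral_prod_continuous[OF contP, of 0 0 "2*pi" pi] P0 by simp
  also have "integral (cbox (0,0) (2*pi,pi)) (\<lambda>t. Qd (fst t) (snd t)) = 0"
  proof -
    have c: "continuous_on (cbox (0,0) (2*pi,pi)) (\<lambda>(x, y). Qd x y)"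
      using contQ by (simp add: case_prod_beta')
    show ?thesis
      using integral_prod_continuous[OF contQ, of 0 0 "2*pi" pi] integral_swap_continuous[OF c] Q0
      by simp
  qed
  finally show ?thesis by simp
qed

lemma Zxy:
  assumes e: "\<epsilon> > 0"
  shows "integral (cbox (0,0) (2*pi,pi)) (\<lambda>t. dz c1 c2 c3 (fst t) (snd t) * dz (-c2) c1 0 (fst t) (snd t)
           / sqrt ((dz c1 c2 c3 (fst t) (snd t))\<^sup>2 + \<epsilon>) * sin (snd t)) = 0"
proof -
  define D where "D \<phi> \<theta> = dz c1 c2 c3 \<phi> \<theta>" for \<phi> \<theta>
  define H where "H \<phi> \<theta> = sqrt ((D \<phi> \<theta>)\<^sup>2 + \<epsilon>)" for \<phi> \<theta>
  have Hpos: "H \<phi> \<theta> > 0" for \<phi> \<theta> unfolding H_def using e by (simp add: add_nonneg_pos)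
  define Qd where "Qd \<phi> \<theta> = sin \<theta> * (D \<phi> \<theta> * (- c1 * sin \<theta> * sin \<phi> + c2 * sin \<theta> * cos \<phi>) / H \<phi> \<theta>)" for \<phi> \<theta>
  have contD: "continuous_on S (\<lambda>t. D (fst t) (snd t))" for S
    unfolding D_def by (intro continuous_intros)
  have contH: "continuous_on S (\<lambda>t. H (fst t) (snd t))" for S
    unfolding H_def by (intro continuous_intros contD)
  have contH': "continuous_on S (\<lambda>t. inverse (H (fst t) (snd t)))" for S
    using Hpos by (intro continuous_intros contH) (auto simp: less_le)
  have contQ: "continuous_on S (\<lambda>t. Qd (fst t) (snd t))" for S
    unfolding Qd_def divide_inverse by (intro continuous_intros contH contH' contD)
  have eq: "dz c1 c2 c3 \<phi> \<theta> * dz (-c2) c1 0 \<phi> \<theta> / sqrt ((dz c1 c2 c3 \<phi> \<theta>)\<^sup>2 + \<epsilon>) * sin \<theta>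
      = - Qd \<phi> \<theta>" for \<phi> \<theta>
  proof -
    have "sqrt ((dz c1 c2 c3 \<phi> \<theta>)\<^sup>2 + \<epsilon>) > 0" using Hpos[of \<phi> \<theta>] by (simp add: H_def D_def)
    then show ?thesis unfolding Qd_def H_def D_def
      by (simp add: field_simps dz_def)
  qed
  have dD\<phi>: "((\<lambda>\<phi>. D \<phi> \<theta>) has_real_derivative (- c1 * sin \<theta> * sin \<phi> + c2 * sin \<theta> * cos \<phi>)) (at \<phi>)" for \<phi> \<theta>
    unfolding D_def dz_def by (auto intro!: derivative_eq_intros)
  have Q0: "integral {0..2*pi} (\<lambda>\<phi>. Qd \<phi> \<theta>) = 0" for \<theta>
  proof (rule FTC0[where F="\<lambda>\<phi>. sin \<theta> * (H \<phi> \<theta> - H 0 \<theta>)"])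
    fix \<phi>
    show "((\<lambda>\<phi>. sin \<theta> * (H \<phi> \<theta> - H 0 \<theta>)) has_real_derivative Qd \<phi> \<theta>) (at \<phi>)"
      unfolding H_def using Hpos[of \<phi> \<theta>]
      by (auto intro!: derivative_eq_intros dD\<phi> simp: Qd_def H_def field_simps power2_eq_square)
  qed (auto simp: H_def D_def dz_def)
  have "integral (cbox (0,0) (2*pi,pi)) (\<lambda>t. dz c1 c2 c3 (fst t) (snd t) * dz (-c2) c1 0 (fst t) (snd t)
           / sqrt ((dz c1 c2 c3 (fst t) (snd t))\<^sup>2 + \<epsilon>) * sin (snd t))
     = integral (cbox (0,0) (2*pi,pi)) (\<lambda>t. - Qd (fst t) (snd t))"
    by (rule integral_cong) (rule eq)
  also have "\<dots> = - integral (cbox (0,0) (2*pi,pi)) (\<lambda>t. Qd (fst t) (snd t))"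
    by (rule integral_neg; rule integrable_continuous; rule contQ)
  also have "integral (cbox (0,0) (2*pi,pi)) (\<lambda>t. Qd (fst t) (snd t)) = 0"
  proof -
    have c: "continuous_on (cbox (0,0) (2*pi,pi)) (\<lambda>(x, y). Qd x y)"
      using contQ by (simp add: case_prod_beta')
    show ?thesis
      using integral_prod_continuous[OF contQ, of 0 0 "2*pi" pi] integral_swap_continuous[OF c] Q0
      by simp
  qed
  finally show ?thesis by simp
qed

lemma d_sqrt:
  assumes e: "\<epsilon> > 0" and g: "(g has_real_derivative g') (at x)"
  shows "((\<lambda>x. sqrt ((g x)\<^sup>2 + \<epsilon>) * s) has_real_derivative (g x * g' / sqrt ((g x)\<^sup>2 + \<epsilon>) * s)) (at x)"
proof -
  have p: "(g x)\<^sup>2 + \<epsilon> > 0" using e by (simp add: add_nonneg_pos)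
  have h: "((\<lambda>x. (g x)\<^sup>2 + \<epsilon>) has_real_derivative (2 * g x * g')) (at x)"
    by (auto intro!: derivative_eq_intros g)
  have "((\<lambda>x. sqrt ((g x)\<^sup>2 + \<epsilon>)) has_real_derivative inverse (sqrt ((g x)\<^sup>2 + \<epsilon>)) / 2 * (2 * g x * g')) (at x)"
    using DERIV_chain2[OF DERIV_real_sqrt[OF p] h] .
  from DERIV_cmult_right[OF this, of s] show ?thesis
    by (rule DERIV_cong) (simp add: field_simps)
qed

definition Fe :: "real \<Rightarrow> real \<Rightarrow> real \<Rightarrow> real \<Rightarrow> real" where
  "Fe \<epsilon> c1 c2 c3 = integral (cbox (0,0) (2*pi,pi))
     (\<lambda>t. sqrt ((dz c1 c2 c3 (fst t) (snd t))\<^sup>2 + \<epsilon>) * sin (snd t))"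

lemma rot_xz:
  assumes e: "\<epsilon> > 0"
  shows "Fe \<epsilon> (c1 * cos \<alpha> - c3 * sin \<alpha>) c2 (c1 * sin \<alpha> + c3 * cos \<alpha>) = Fe \<epsilon> c1 c2 c3"
proof -
  define f where "f \<alpha> t = sqrt ((dz (c1 * cos \<alpha> - c3 * sin \<alpha>) c2 (c1 * sin \<alpha> + c3 * cos \<alpha>) (fst t) (snd t))\<^sup>2 + \<epsilon>) * sin (snd t)"
    for \<alpha> and t :: "real \<times> real"
  define fx where "fx \<alpha> t = dz (c1 * cos \<alpha> - c3 * sin \<alpha>) c2 (c1 * sin \<alpha> + c3 * cos \<alpha>) (fst t) (snd t)
      * dz (- (c1 * sin \<alpha> + c3 * cos \<alpha>)) 0 (c1 * cos \<alpha> - c3 * sin \<alpha>) (fst t) (snd t)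
      / sqrt ((dz (c1 * cos \<alpha> - c3 * sin \<alpha>) c2 (c1 * sin \<alpha> + c3 * cos \<alpha>) (fst t) (snd t))\<^sup>2 + \<epsilon>) * sin (snd t)"
    for \<alpha> and t :: "real \<times> real"
  have pos: "sqrt ((dz a b c x y)\<^sup>2 + \<epsilon>) > 0" for a b c x y using e by (simp add: add_nonneg_pos)
  have "DERIV (\<lambda>\<alpha>. integral (cbox (0,0) (2*pi,pi)) (f \<alpha>)) \<alpha> :> integral (cbox (0,0) (2*pi,pi)) (fx \<alpha>)" for \<alpha>
  proof (rule leibniz_rule_field_derivative[where U=UNIV])
    fix x t
    show "((\<lambda>x. f x t) has_field_derivative fx x t) (at x within UNIV)"
      unfolding f_def fx_def
      by (rule d_sqrt[OF e]) (auto intro!: derivative_eq_intros simp: dz_def algebra_simps)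
  next
    fix x
    show "f x integrable_on cbox (0, 0) (2 * pi, pi)"
      unfolding f_def by (intro integrable_continuous continuous_intros)
  next
    have cont: "continuous_on (UNIV \<times> cbox (0, 0) (2 * pi, pi))
       (\<lambda>x. inverse (sqrt ((dz (c1 * cos (fst x) - c3 * sin (fst x)) c2 (c1 * sin (fst x) + c3 * cos (fst x)) (fst (snd x)) (snd (snd x)))\<^sup>2 + \<epsilon>)))"
      using pos by (intro continuous_intros) (auto simp: less_le)
    show "continuous_on (UNIV \<times> cbox (0, 0) (2 * pi, pi)) (\<lambda>(x, t). fx x t)"
      unfolding fx_def case_prod_beta' divide_inverse by (intro continuous_intros cont)
  qed auto
  moreover have "integral (cbox (0,0) (2*pi,pi)) (fx \<alpha>) = 0" for \<alpha>
    unfolding fx_def by (rule Zxz[OF e])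
  ultimately have "\<forall>\<alpha>. DERIV (\<lambda>\<alpha>. integral (cbox (0,0) (2*pi,pi)) (f \<alpha>)) \<alpha> :> 0" by simp
  from DERIV_isconst_all[OF this, of \<alpha> 0]
  show ?thesis unfolding Fe_def f_def by simp
qed

lemma rot_xy:
  assumes e: "\<epsilon> > 0"
  shows "Fe \<epsilon> (c1 * cos \<alpha> - c2 * sin \<alpha>) (c1 * sin \<alpha> + c2 * cos \<alpha>) c3 = Fe \<epsilon> c1 c2 c3"
proof -
  define f where "f \<alpha> t = sqrt ((dz (c1 * cos \<alpha> - c2 * sin \<alpha>) (c1 * sin \<alpha> + c2 * cos \<alpha>) c3 (fst t) (snd t))\<^sup>2 + \<epsilon>) * sin (snd t)"
    for \<alpha> and t :: "real \<times> real"
  define fx where "fx \<alpha> t = dz (c1 * cos \<alpha> - c2 * sin \<alpha>) (c1 * sin \<alpha> + c2 * cos \<alpha>) c3 (fst t) (snd t)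
      * dz (- (c1 * sin \<alpha> + c2 * cos \<alpha>)) (c1 * cos \<alpha> - c2 * sin \<alpha>) 0 (fst t) (snd t)
      / sqrt ((dz (c1 * cos \<alpha> - c2 * sin \<alpha>) (c1 * sin \<alpha> + c2 * cos \<alpha>) c3 (fst t) (snd t))\<^sup>2 + \<epsilon>) * sin (snd t)"
    for \<alpha> and t :: "real \<times> real"
  have pos: "sqrt ((dz a b c x y)\<^sup>2 + \<epsilon>) > 0" for a b c x y using e by (simp add: add_nonneg_pos)
  have "DERIV (\<lambda>\<alpha>. integral (cbox (0,0) (2*pi,pi)) (f \<alpha>)) \<alpha> :> integral (cbox (0,0) (2*pi,pi)) (fx \<alpha>)" for \<alpha>
  proof (rule leibniz_rule_field_derivative[where U=UNIV])
    fix x t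
    show "((\<lambda>x. f x t) has_field_derivative fx x t) (at x within UNIV)"
      unfolding f_def fx_def
      by (rule d_sqrt[OF e]) (auto intro!: derivative_eq_intros simp: dz_def algebra_simps)
  next
    fix x
    show "f x integrable_on cbox (0, 0) (2 * pi, pi)"
      unfolding f_def by (intro integrable_continuous continuous_intros)
  next
    have cont: "continuous_on (UNIV \<times> cbox (0, 0) (2 * pi, pi))
       (\<lambda>x. inverse (sqrt ((dz (c1 * cos (fst x) - c2 * sin (fst x)) (c1 * sin (fst x) + c2 * cos (fst x)) c3 (fst (snd x)) (snd (snd x)))\<^sup>2 + \<epsilon>)))"
      using pos by (intro continuous_intros) (auto simp: less_le)
    show "continuous_on (UNIV \<times> cbox (0, 0) (2 * pi, pi)) (\<lambda>(x, t). fx x t)"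
      unfolding fx_def case_prod_beta' divide_inverse by (intro continuous_intros cont)
  qed auto
  moreover have "integral (cbox (0,0) (2*pi,pi)) (fx \<alpha>) = 0" for \<alpha>
    unfolding fx_def by (rule Zxy[OF e])
  ultimately have "\<forall>\<alpha>. DERIV (\<lambda>\<alpha>. integral (cbox (0,0) (2*pi,pi)) (f \<alpha>)) \<alpha> :> 0" by simp
  from DERIV_isconst_all[OF this, of \<alpha> 0]
  show ?thesis unfolding Fe_def f_def by simp
qed


lemma ftc_eq:
  fixes F :: "real \<Rightarrow> real"
  assumes "a \<le> b" "\<And>x. x \<in> {a..b} \<Longrightarrow> (F has_real_derivative f x) (at x)"
  shows "integral {a..b} f = F b - F a"
proof -
  have "(f has_integral (F b - F a)) {a..b}"
    by (rule fundamental_theorem_of_calculus[OF assms(1)])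
       (use assms(2) in \<open>auto simp: has_real_derivative_iff_has_vector_derivative[symmetric] intro: has_field_derivative_at_within\<close>)
  then show ?thesis by (simp add: integral_unique)
qed

lemma int_abscos_sin: "integral {0..pi} (\<lambda>\<theta>. \<bar>cos \<theta>\<bar> * sin \<theta>) = 1"
proof -
  have i: "(\<lambda>\<theta>. \<bar>cos \<theta>\<bar> * sin \<theta>) integrable_on {0..pi}"
    by (intro integrable_continuous_interval continuous_intros)
  have 1: "integral {0..pi/2} (\<lambda>\<theta>. \<bar>cos \<theta>\<bar> * sin \<theta>) = 1/2"
  proof -
    have "integral {0..pi/2} (\<lambda>\<theta>. \<bar>cos \<theta>\<bar> * sin \<theta>) = integral {0..pi/2} (\<lambda>\<theta>. cos \<theta> * sin \<theta>)"
    proof (rule integral_cong)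
      fix x assume "x \<in> {0..pi/2}"
      then have "cos x \<ge> 0" by (intro cos_ge_zero) auto
      then show "\<bar>cos x\<bar> * sin x = cos x * sin x" by simp
    qed
    also have "\<dots> = (sin (pi/2))\<^sup>2 / 2 - (sin 0)\<^sup>2/2"
      by (rule ftc_eq) (auto intro!: derivative_eq_intros)
    finally show ?thesis by simp
  qed
  have 2: "integral {pi/2..pi} (\<lambda>\<theta>. \<bar>cos \<theta>\<bar> * sin \<theta>) = 1/2"
  proof -
    have "integral {pi/2..pi} (\<lambda>\<theta>. \<bar>cos \<theta>\<bar> * sin \<theta>) = integral {pi/2..pi} (\<lambda>\<theta>. - cos \<theta> * sin \<theta>)"
    proof (rule integral_cong)
      fix x assume "x \<in> {pi/2..pi}"
      then have "cos (pi - x) \<ge> 0" by (intro cos_ge_zero) auto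
      then have "cos x \<le> 0" by simp
      then show "\<bar>cos x\<bar> * sin x = - cos x * sin x" by simp
    qed
    also have "\<dots> = (- (sin pi)\<^sup>2 / 2) - (- (sin (pi/2))\<^sup>2/2)"
      by (rule ftc_eq) (auto intro!: derivative_eq_intros)
    finally show ?thesis by simp
  qed
  show ?thesis
    using Henstock_Kurzweil_Integration.integral_combine[of 0 "pi/2" pi, OF _ _ i] 1 2 by simp
qed

lemma int_sin: "integral {0..pi} (\<lambda>\<theta>. sin \<theta>) = 2"
proof -
  have "integral {0..pi} (\<lambda>\<theta>. sin \<theta>) = (- cos pi) - (- cos 0)"
    by (rule ftc_eq) (auto intro!: derivative_eq_intros)
  then show ?thesis by simp
qed

lemma Fe_axis:
  assumes e: "\<epsilon> > 0" and N: "N \<ge> 0"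
  shows "Fe \<epsilon> 0 0 N \<le> 2 * pi * N + 4 * pi * sqrt \<epsilon>"
proof -
  have "Fe \<epsilon> 0 0 N \<le> integral (cbox (0,0) (2*pi,pi)) (\<lambda>t. (N * \<bar>cos (snd t)\<bar> + sqrt \<epsilon>) * sin (snd t))"
    unfolding Fe_def
  proof (rule integral_le)
    show "(\<lambda>t. sqrt ((dz 0 0 N (fst t) (snd t))\<^sup>2 + \<epsilon>) * sin (snd t)) integrable_on cbox (0, 0) (2 * pi, pi)"
      by (intro integrable_continuous continuous_intros)
    show "(\<lambda>t. (N * \<bar>cos (snd t)\<bar> + sqrt \<epsilon>) * sin (snd t)) integrable_on cbox (0, 0) (2 * pi, pi)"
      by (intro integrable_continuous continuous_intros)
  next
    fix t :: "real \<times> real" assume t: "t \<in> cbox (0, 0) (2 * pi, pi)"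
    then have s: "sin (snd t) \<ge> 0" by (cases t) (auto intro!: sin_ge_zero simp: cbox_Pair_iff)
    have "sqrt ((dz 0 0 N (fst t) (snd t))\<^sup>2 + \<epsilon>) \<le> N * \<bar>cos (snd t)\<bar> + sqrt \<epsilon>"
    proof (rule real_le_lsqrt)
      show "0 \<le> N * \<bar>cos (snd t)\<bar> + sqrt \<epsilon>" using N e by simp
      have "0 \<le> 2 * (N * \<bar>cos (snd t)\<bar>) * sqrt \<epsilon>" using N e by simp
      then show "(dz 0 0 N (fst t) (snd t))\<^sup>2 + \<epsilon> \<le> (N * \<bar>cos (snd t)\<bar> + sqrt \<epsilon>)\<^sup>2"
        using e by (simp add: dz_def power2_sum power_mult_distrib)
    qed
    then show "sqrt ((dz 0 0 N (fst t) (snd t))\<^sup>2 + \<epsilon>) * sin (snd t) \<le> (N * \<bar>cos (snd t)\<bar> + sqrt \<epsilon>) * sin (snd t)"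
      using s by (rule mult_right_mono)
  qed
  also have "\<dots> = integral {0..2*pi} (\<lambda>x. integral {0..pi} (\<lambda>\<theta>. (N * \<bar>cos \<theta>\<bar> + sqrt \<epsilon>) * sin \<theta>))"
    using integral_prod_continuous[of 0 0 "2*pi" pi "\<lambda>t. (N * \<bar>cos (snd t)\<bar> + sqrt \<epsilon>) * sin (snd t)"]
    by (simp add: continuous_intros)
  also have "integral {0..pi} (\<lambda>\<theta>. (N * \<bar>cos \<theta>\<bar> + sqrt \<epsilon>) * sin \<theta>) = N + 2 * sqrt \<epsilon>"
  proof -
    have "integral {0..pi} (\<lambda>\<theta>. (N * \<bar>cos \<theta>\<bar> + sqrt \<epsilon>) * sin \<theta>)
       = integral {0..pi} (\<lambda>\<theta>. N * (\<bar>cos \<theta>\<bar> * sin \<theta>) + sqrt \<epsilon> * sin \<theta>)"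
      by (simp add: algebra_simps)
    also have "\<dots> = N * integral {0..pi} (\<lambda>\<theta>. \<bar>cos \<theta>\<bar> * sin \<theta>) + sqrt \<epsilon> * integral {0..pi} (\<lambda>\<theta>. sin \<theta>)"
      by (subst integral_add) (auto intro!: integrable_continuous_interval continuous_intros)
    finally show ?thesis by (simp add: int_abscos_sin int_sin)
  qed
  finally show ?thesis by (simp add: algebra_simps)
qed

lemma Fe_rotate:
  assumes e: "\<epsilon> > 0"
  shows "Fe \<epsilon> b1 b2 b3 = Fe \<epsilon> 0 0 (sqrt (b1\<^sup>2 + b2\<^sup>2 + b3\<^sup>2))"
proof -
  define \<rho> where "\<rho> = sqrt (b1\<^sup>2 + b2\<^sup>2)"
  define N where "N = sqrt (b1\<^sup>2 + b2\<^sup>2 + b3\<^sup>2)"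
  obtain t1 where t1: "b1 = \<rho> * cos t1" "b2 = \<rho> * sin t1"
  proof (cases "\<rho> = 0")
    case True
    then have "b1 = 0" "b2 = 0" unfolding \<rho>_def by (auto simp: add_nonneg_eq_0_iff)
    then show ?thesis using that[of 0] True by simp
  next
    case False
    have \<rho>0: "\<rho> \<ge> 0" unfolding \<rho>_def by simp
    then have \<rho>p: "\<rho> > 0" using False by simp
    have \<rho>2: "\<rho>\<^sup>2 = b1\<^sup>2 + b2\<^sup>2" unfolding \<rho>_def by (simp add: add_nonneg_nonneg)
    have "(b1/\<rho>)\<^sup>2 + (b2/\<rho>)\<^sup>2 = (b1\<^sup>2 + b2\<^sup>2) / \<rho>\<^sup>2"
      by (simp add: power_divide add_divide_distrib)
    also have "\<dots> = 1" unfolding \<rho>2[symmetric] using \<rho>p by simp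
    finally have "(b1/\<rho>)\<^sup>2 + (b2/\<rho>)\<^sup>2 = 1" .
    from sincos_total_2pi[OF this] obtain t where "b1/\<rho> = cos t" "b2/\<rho> = sin t" by metis
    then show ?thesis using that[of t] \<rho>p by (simp add: field_simps)
  qed
  have \<rho>0: "\<rho> \<ge> 0" unfolding \<rho>_def by simp
  obtain t2 where t2: "\<rho> = N * sin t2" "b3 = N * cos t2"
  proof (cases "N = 0")
    case True
    then have "b1 = 0" "b2 = 0" "b3 = 0" unfolding N_def by (auto simp: add_nonneg_eq_0_iff)
    then show ?thesis using that[of 0] True unfolding \<rho>_def by simp
  next
    case False
    have N0: "N \<ge> 0" unfolding N_def by simp
    then have Np: "N > 0" using False by simp
    have NN: "N\<^sup>2 = \<rho>\<^sup>2 + b3\<^sup>2" unfolding N_def \<rho>_def by (simp add: add_nonneg_nonneg)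
    have "(b3/N)\<^sup>2 + (\<rho>/N)\<^sup>2 = (\<rho>\<^sup>2 + b3\<^sup>2) / N\<^sup>2"
      by (simp add: power_divide add_divide_distrib)
    also have "\<dots> = 1" unfolding NN[symmetric] using Np by simp
    finally have "(b3/N)\<^sup>2 + (\<rho>/N)\<^sup>2 = 1" .
    from sincos_total_2pi[OF this] obtain t where "b3/N = cos t" "\<rho>/N = sin t" by metis
    then show ?thesis using that[of t] Np by (simp add: field_simps)
  qed
  have "Fe \<epsilon> b1 b2 b3 = Fe \<epsilon> (b1 * cos (-t1) - b2 * sin (-t1)) (b1 * sin (-t1) + b2 * cos (-t1)) b3"
    by (rule rot_xy[OF e, symmetric])
  also have "\<dots> = Fe \<epsilon> \<rho> 0 b3"
  proof -
    have "\<rho> * cos t1 * cos t1 + \<rho> * sin t1 * sin t1 = \<rho>"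
      by (metis distrib_left mult.assoc mult_1_right sin_cos_squared_add3)
    then show ?thesis unfolding t1 by (simp add: algebra_simps)
  qed
  also have "\<dots> = Fe \<epsilon> (\<rho> * cos t2 - b3 * sin t2) 0 (\<rho> * sin t2 + b3 * cos t2)"
    by (rule rot_xz[OF e, symmetric])
  also have "\<dots> = Fe \<epsilon> 0 0 N"
  proof -
    have "N * sin t2 * sin t2 + N * cos t2 * cos t2 = N"
      by (metis distrib_left mult.assoc mult_1_right sin_cos_squared_add3 add.commute)
    then show ?thesis unfolding t2 by (simp add: algebra_simps)
  qed
  finally show ?thesis unfolding N_def .
qed

lemma sphere_bound:
  "integral (cbox (0,0) (2*pi,pi)) (\<lambda>t. \<bar>dz b1 b2 b3 (fst t) (snd t)\<bar> * sin (snd t))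
     \<le> 2 * pi * sqrt (b1\<^sup>2 + b2\<^sup>2 + b3\<^sup>2)"
proof -
  define I where "I = integral (cbox (0,0) (2*pi,pi)) (\<lambda>t. \<bar>dz b1 b2 b3 (fst t) (snd t)\<bar> * sin (snd t))"
  define N where "N = sqrt (b1\<^sup>2 + b2\<^sup>2 + b3\<^sup>2)"
  have key: "I \<le> 2 * pi * N + 4 * pi * sqrt \<epsilon>" if e: "\<epsilon> > 0" for \<epsilon>
  proof -
    have "I \<le> Fe \<epsilon> b1 b2 b3"
      unfolding I_def Fe_def
    proof (rule integral_le)
      fix t :: "real \<times> real" assume t: "t \<in> cbox (0, 0) (2 * pi, pi)"
      then have s: "sin (snd t) \<ge> 0" by (cases t) (auto intro!: sin_ge_zero simp: cbox_Pair_iff)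
      have "\<bar>dz b1 b2 b3 (fst t) (snd t)\<bar> \<le> sqrt ((dz b1 b2 b3 (fst t) (snd t))\<^sup>2 + \<epsilon>)"
        by (rule real_le_rsqrt) (use e in simp)
      then show "\<bar>dz b1 b2 b3 (fst t) (snd t)\<bar> * sin (snd t) \<le> sqrt ((dz b1 b2 b3 (fst t) (snd t))\<^sup>2 + \<epsilon>) * sin (snd t)"
        using s by (rule mult_right_mono)
    qed (intro integrable_continuous continuous_intros)+
    also have "\<dots> = Fe \<epsilon> 0 0 N" unfolding N_def by (rule Fe_rotate[OF e])
    also have "\<dots> \<le> 2 * pi * N + 4 * pi * sqrt \<epsilon>" by (rule Fe_axis[OF e]) (simp add: N_def)
    finally show ?thesis .
  qed
  show ?thesis
  proof (rule ccontr)
    assume "\<not> ?thesis"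
    then have d: "I - 2 * pi * N > 0" unfolding I_def N_def by simp
    define \<epsilon> where "\<epsilon> = ((I - 2 * pi * N) / (8 * pi))\<^sup>2"
    have e: "\<epsilon> > 0" unfolding \<epsilon>_def using d by simp
    have "sqrt \<epsilon> = (I - 2 * pi * N) / (8 * pi)" unfolding \<epsilon>_def using d by simp
    with key[OF e] d show False by (simp add: field_simps)
  qed
qed


lemma dz_bound:
  assumes "a1\<^sup>2 + a2\<^sup>2 + a3\<^sup>2 \<le> 1"
  shows "\<bar>dz a1 a2 a3 \<phi> \<theta>\<bar> \<le> 1"
proof -
  define z1 where "z1 = sin \<theta> * cos \<phi>"
  define z2 where "z2 = sin \<theta> * sin \<phi>"
  define z3 where "z3 = cos \<theta>"
  have zz: "z1\<^sup>2 + z2\<^sup>2 + z3\<^sup>2 = 1"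
  proof -
    have "(cos \<phi>)\<^sup>2 * (sin \<theta>)\<^sup>2 + (sin \<phi>)\<^sup>2 * (sin \<theta>)\<^sup>2 = (sin \<theta>)\<^sup>2"
      by (metis distrib_right sin_cos_squared_add mult_1 add.commute)
    then show ?thesis unfolding z1_def z2_def z3_def
      using sin_cos_squared_add[of \<theta>] by (simp add: power_mult_distrib algebra_simps)
  qed
  have d: "dz a1 a2 a3 \<phi> \<theta> = a1 * z1 + a2 * z2 + a3 * z3"
    unfolding dz_def z1_def z2_def z3_def by (simp add: algebra_simps)
  have "(a1 * z1 + a2 * z2 + a3 * z3)\<^sup>2 \<le> (a1\<^sup>2 + a2\<^sup>2 + a3\<^sup>2) * (z1\<^sup>2 + z2\<^sup>2 + z3\<^sup>2)"
  proof -
    have "(a1\<^sup>2 + a2\<^sup>2 + a3\<^sup>2) * (z1\<^sup>2 + z2\<^sup>2 + z3\<^sup>2) - (a1 * z1 + a2 * z2 + a3 * z3)\<^sup>2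
       = (a1*z2 - a2*z1)\<^sup>2 + (a1*z3 - a3*z1)\<^sup>2 + (a2*z3 - a3*z2)\<^sup>2"
      by (simp add: power2_eq_square algebra_simps)
    moreover have "0 \<le> (a1*z2 - a2*z1)\<^sup>2 + (a1*z3 - a3*z1)\<^sup>2 + (a2*z3 - a3*z2)\<^sup>2" by simp
    ultimately show ?thesis by linarith
  qed
  also have "\<dots> \<le> 1" using assms zz by simp
  finally have "(dz a1 a2 a3 \<phi> \<theta>)\<^sup>2 \<le> 1" using d by simp
  then show ?thesis by (simp add: abs_square_le_1)
qed

lemma fubini_box:
  fixes \<mu> :: "'l measure" and a1 a2 a3 :: "'l \<Rightarrow> real"
  assumes P: "prob_space \<mu>"
    and m1[measurable]: "a1 \<in> borel_measurable \<mu>"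
    and m2[measurable]: "a2 \<in> borel_measurable \<mu>"
    and m3[measurable]: "a3 \<in> borel_measurable \<mu>"
    and b: "\<And>l. l \<in> space \<mu> \<Longrightarrow> (a1 l)\<^sup>2 + (a2 l)\<^sup>2 + (a3 l)\<^sup>2 \<le> 1"
  shows "(\<lambda>t. \<integral>l. \<bar>dz (a1 l) (a2 l) (a3 l) (fst t) (snd t)\<bar> * sin (snd t) \<partial>\<mu>) integrable_on cbox (0,0) (2*pi,pi)"
    "integral (cbox (0,0) (2*pi,pi)) (\<lambda>t. \<integral>l. \<bar>dz (a1 l) (a2 l) (a3 l) (fst t) (snd t)\<bar> * sin (snd t) \<partial>\<mu>) \<le> 2 * pi"
proof -
  interpret prob_space \<mu> by (rule P)
  interpret pair_sigma_finite \<mu> "lborel :: (real \<times> real) measure" by unfold_locales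
  define B where "B = cbox (0::real,0::real) (2*pi,pi)"
  have B[measurable]: "B \<in> sets borel" unfolding B_def by (simp add: borel_closed)
  define k where "k l t = \<bar>dz (a1 l) (a2 l) (a3 l) (fst t) (snd t)\<bar> * sin (snd t)" for l and t :: "real \<times> real"
  define f where "f l t = indicator B t * k l t" for l t
  have zm: "(\<lambda>x. g (snd x)) \<in> borel_measurable (\<mu> \<Otimes>\<^sub>M lborel)" if "continuous_on UNIV g" for g :: "real \<times> real \<Rightarrow> real"
    by (rule measurable_compose[OF measurable_snd]) (simp add: borel_measurable_continuous_onI that measurable_lborel1)
  define z1 where "z1 t = sin (snd t) * cos (fst t)" for t :: "real \<times> real"
  define z2 where "z2 t = sin (snd t) * sin (fst t)" for t :: "real \<times> real"
  define z3 where "z3 t = cos (snd t)" for t :: "real \<times> real"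
  define z4 where "z4 t = sin (snd t)" for t :: "real \<times> real"
  have [measurable]: "(\<lambda>x. z1 (snd x)) \<in> borel_measurable (\<mu> \<Otimes>\<^sub>M lborel)"
    "(\<lambda>x. z2 (snd x)) \<in> borel_measurable (\<mu> \<Otimes>\<^sub>M lborel)"
    "(\<lambda>x. z3 (snd x)) \<in> borel_measurable (\<mu> \<Otimes>\<^sub>M lborel)"
    "(\<lambda>x. z4 (snd x)) \<in> borel_measurable (\<mu> \<Otimes>\<^sub>M lborel)"
    unfolding z1_def z2_def z3_def z4_def by (intro zm continuous_intros)+
  have [measurable]: "(\<lambda>x. indicator B (snd x) :: real) \<in> borel_measurable (\<mu> \<Otimes>\<^sub>M lborel)"
    by (rule measurable_compose[OF measurable_snd]) (simp add: measurable_lborel1)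
  have feq: "(\<lambda>(l, t). f l t) = (\<lambda>x. indicator B (snd x) * (\<bar>a1 (fst x) * z1 (snd x) + a2 (fst x) * z2 (snd x) + a3 (fst x) * z3 (snd x)\<bar> * z4 (snd x)))"
    by (auto simp: f_def k_def dz_def z1_def z2_def z3_def z4_def algebra_simps)
  have fm: "(\<lambda>(l, t). f l t) \<in> borel_measurable (\<mu> \<Otimes>\<^sub>M lborel)"
    unfolding feq by measurable
  have kb: "\<bar>k l t\<bar> \<le> 1" if "l \<in> space \<mu>" for l t
  proof -
    have "\<bar>k l t\<bar> = \<bar>dz (a1 l) (a2 l) (a3 l) (fst t) (snd t)\<bar> * \<bar>sin (snd t)\<bar>"
      unfolding k_def by (simp add: abs_mult)
    also have "\<dots> \<le> 1 * 1"
      by (intro mult_mono dz_bound b that) auto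
    finally show ?thesis by simp
  qed
  have fint: "integrable (\<mu> \<Otimes>\<^sub>M lborel) (\<lambda>(l, t). f l t)"
  proof (rule Bochner_Integration.integrable_bound[where f="indicator (space \<mu> \<times> B)"])
    have "emeasure (\<mu> \<Otimes>\<^sub>M lborel) (space \<mu> \<times> B) = emeasure \<mu> (space \<mu>) * emeasure lborel B"
      by (rule lborel.emeasure_pair_measure_Times) auto
    also have "\<dots> < \<infinity>" unfolding B_def by (simp add: emeasure_lborel_cbox_eq ennreal_mult_less_top emeasure_space_1)
    finally show "integrable (\<mu> \<Otimes>\<^sub>M lborel) (indicator (space \<mu> \<times> B) :: _ \<Rightarrow> real)"
      by (subst integrable_indicator_iff) (auto simp: space_pair_measure Times_Int_Times)
    show "AE x in \<mu> \<Otimes>\<^sub>M (lborel :: (real \<times> real) measure). norm ((case x of (l, t) \<Rightarrow> f l t)) \<le> norm (indicator (space \<mu> \<times> B) x :: real)"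
    proof (rule AE_I2)
      fix x :: "'l \<times> real \<times> real" assume "x \<in> space (\<mu> \<Otimes>\<^sub>M (lborel :: (real \<times> real) measure))"
      then obtain l t where x: "x = (l, t)" "l \<in> space \<mu>" by (auto simp: space_pair_measure)
      show "norm ((case x of (l, t) \<Rightarrow> f l t)) \<le> norm (indicator (space \<mu> \<times> B) x :: real)"
        using kb[OF x(2), of t] x by (auto simp: f_def indicator_def)
    qed
  qed (rule fm)
  have Gint: "integrable lborel (\<lambda>t. \<integral>l. f l t \<partial>\<mu>)"
    by (rule integrable_snd[OF fint])
  have Geq: "(\<integral>l. f l t \<partial>\<mu>) = indicator B t *\<^sub>R (\<integral>l. k l t \<partial>\<mu>)" for t
    unfolding f_def by simp
  have sG: "set_integrable lborel B (\<lambda>t. \<integral>l. k l t \<partial>\<mu>)"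
    unfolding set_integrable_def using Gint Geq by simp
  show "(\<lambda>t. \<integral>l. \<bar>dz (a1 l) (a2 l) (a3 l) (fst t) (snd t)\<bar> * sin (snd t) \<partial>\<mu>) integrable_on cbox (0,0) (2*pi,pi)"
    using set_borel_integral_eq_integral(1)[OF sG] unfolding B_def k_def .
  have "integral B (\<lambda>t. \<integral>l. k l t \<partial>\<mu>) = (LINT t : B | lborel. (\<integral>l. k l t \<partial>\<mu>))"
    using set_borel_integral_eq_integral(2)[OF sG] by simp
  also have "\<dots> = (\<integral>t. (\<integral>l. f l t \<partial>\<mu>) \<partial>lborel)"
    unfolding set_lebesgue_integral_def using Geq by simp
  also have "\<dots> = (\<integral>l. (\<integral>t. f l t \<partial>lborel) \<partial>\<mu>)"
    by (rule Fubini_integral[OF fint])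
  also have "\<dots> \<le> (\<integral>l. 2 * pi \<partial>\<mu>)"
  proof (rule integral_mono)
    show "integrable \<mu> (\<lambda>l. \<integral>t. f l t \<partial>lborel)" by (rule integrable_fst[OF fint])
    show "integrable \<mu> (\<lambda>l. 2 * pi)" by simp
    fix l assume l: "l \<in> space \<mu>"
    have ck: "continuous_on B (k l)" unfolding k_def by (intro continuous_intros)
    have si: "set_integrable lborel B (k l)"
      unfolding set_integrable_def by (rule borel_integrable_compact[OF _ ck]) (simp add: B_def)
    have "(\<integral>t. f l t \<partial>lborel) = (LINT t : B | lborel. k l t)"
      unfolding set_lebesgue_integral_def f_def by simp
    also have "\<dots> = integral B (k l)" by (rule set_borel_integral_eq_integral(2)[OF si])
    also have "\<dots> \<le> 2 * pi * sqrt ((a1 l)\<^sup>2 + (a2 l)\<^sup>2 + (a3 l)\<^sup>2)"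
      unfolding B_def k_def by (rule sphere_bound)
    also have "\<dots> \<le> 2 * pi * 1"
      using b[OF l] by (intro mult_left_mono) auto
    finally show "(\<integral>t. f l t \<partial>lborel) \<le> 2 * pi" by simp
  qed
  also have "\<dots> = 2 * pi" by (simp add: prob_space)
  finally show "integral (cbox (0,0) (2*pi,pi)) (\<lambda>t. \<integral>l. \<bar>dz (a1 l) (a2 l) (a3 l) (fst t) (snd t)\<bar> * sin (snd t) \<partial>\<mu>) \<le> 2 * pi"
    unfolding B_def k_def .
qed


lemma UNIV_22: "(UNIV :: (2 \<times> 2) set) = {(1,1),(1,2),(2,1),(2,2)}"
  using exhaust_2 by auto

lemma sum_22: "sum f (UNIV :: (2 \<times> 2) set) = f (1,1) + f (1,2) + f (2,1) + f (2,2)"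
  unfolding UNIV_22 by (simp add: add.assoc)

lemma two_ne: "(1::2) \<noteq> 2" by simp

lemma L1: "trace (ptrace_A (kron M (mat 1) ** \<rho>) ** W) = trace (\<rho> ** kron M W)"
  by (simp add: trace_def ptrace_A_def kron_def matrix_matrix_mult_def mat_def sum_22 sum_2 algebra_simps)


definition PS :: "real^3 \<Rightarrow> cmat2" where
  "PS u = (\<chi> r c. \<Sum>i\<in>UNIV. complex_of_real (u$i) * pauli i $ r $ c)"

lemma three_simps: "(3::3) = 0" "(1::3) \<noteq> 0" "(2::3) \<noteq> 0" "(2::2) = 0" "(1::2) \<noteq> 0"
  by simp_all

lemma PS_entries:
  "PS u $ 1 $ 1 = - complex_of_real (u$2)"
  "PS u $ 2 $ 2 = complex_of_real (u$2)"
  "PS u $ 1 $ 2 = complex_of_real (u$0) + \<i> * complex_of_real (u$1)"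
  "PS u $ 2 $ 1 = complex_of_real (u$0) - \<i> * complex_of_real (u$1)"
  by (simp_all add: PS_def sum_3 pauli_def sigma1_def sigma2_def sigma3_def three_simps)

lemma L2: "Re (trace (\<rho> ** kron (PS u) (PS w))) = u \<bullet> (corr_matrix \<rho> *v w)"
  by (simp add: trace_def kron_def matrix_matrix_mult_def sum_22 sum_2 sum_3 PS_def
     corr_matrix_def inner_vec_def matrix_vector_mult_def pauli_def sigma1_def sigma2_def sigma3_def three_simps
     algebra_simps)


lemma inner3: "u \<bullet> (v::real^3) = u$0 * v$0 + u$1 * v$1 + u$2 * v$2"
  by (simp add: inner_vec_def sum_3 three_simps)

lemma CS3:
  fixes a1 a2 a3 z1 z2 z3 :: real
  shows "(a1 * z1 + a2 * z2 + a3 * z3)\<^sup>2 \<le> (a1\<^sup>2 + a2\<^sup>2 + a3\<^sup>2) * (z1\<^sup>2 + z2\<^sup>2 + z3\<^sup>2)"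
proof -
  have "(a1\<^sup>2 + a2\<^sup>2 + a3\<^sup>2) * (z1\<^sup>2 + z2\<^sup>2 + z3\<^sup>2) - (a1 * z1 + a2 * z2 + a3 * z3)\<^sup>2
     = (a1*z2 - a2*z1)\<^sup>2 + (a1*z3 - a3*z1)\<^sup>2 + (a2*z3 - a3*z2)\<^sup>2"
    by (simp add: power2_eq_square algebra_simps)
  moreover have "0 \<le> (a1*z2 - a2*z1)\<^sup>2 + (a1*z3 - a3*z1)\<^sup>2 + (a2*z3 - a3*z2)\<^sup>2" by simp
  ultimately show ?thesis by linarith
qed

definition Mu :: "real^3 \<Rightarrow> nat \<Rightarrow> cmat2" where
  "Mu u a = (\<chi> r c. ((if r = c then 1 else 0) + (if a = 0 then 1 else -1) * PS u $ r $ c) / 2)"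

lemma psd_Mu:
  assumes u: "u \<bullet> u \<le> 1"
  shows "psd (Mu u a)"
  unfolding psd_def
proof
  fix v :: "complex^2"
  define s :: real where "s = (if a = 0 then 1 else -1)"
  have s2: "s\<^sup>2 = 1" unfolding s_def by simp
  define P where "P = (Re (v$1))\<^sup>2 + (Im (v$1))\<^sup>2"
  define R where "R = (Re (v$2))\<^sup>2 + (Im (v$2))\<^sup>2"
  define X where "X = Re (v$1) * Re (v$2) + Im (v$1) * Im (v$2)"
  define Y where "Y = Re (v$1) * Im (v$2) - Im (v$1) * Re (v$2)"
  define K where "K = - (u$2) * (P - R) + 2 * (u$0) * X - 2 * (u$1) * Y"
  have Q: "(\<Sum>i\<in>UNIV. \<Sum>j\<in>UNIV. cnj (v $ i) * Mu u a $ i $ j * v $ j)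
      = complex_of_real ((P + R + s * K) / 2)"
    unfolding Mu_def s_def
    by (cases "a = 0") (simp_all add: sum_2 PS_entries complex_eq_iff P_def R_def K_def X_def Y_def
        power2_eq_square field_simps)
  have XY: "X\<^sup>2 + Y\<^sup>2 = P * R"
    unfolding X_def Y_def P_def R_def by (simp add: power2_eq_square algebra_simps)
  have "K\<^sup>2 \<le> ((u$2)\<^sup>2 + (u$0)\<^sup>2 + (u$1)\<^sup>2) * ((R - P)\<^sup>2 + (2*X)\<^sup>2 + (2*Y)\<^sup>2)"
    using CS3[of "u$2" "R - P" "u$0" "2*X" "- (u$1)" "2*Y"] unfolding K_def
    by (simp add: algebra_simps)
  also have "\<dots> \<le> 1 * (P + R)\<^sup>2"
  proof (rule mult_mono)
    show "(u$2)\<^sup>2 + (u$0)\<^sup>2 + (u$1)\<^sup>2 \<le> 1" using u by (simp add: inner3 power2_eq_square)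
    show "(R - P)\<^sup>2 + (2*X)\<^sup>2 + (2*Y)\<^sup>2 \<le> (P + R)\<^sup>2"
      using XY by (simp add: power2_eq_square algebra_simps)
  qed auto
  finally have "K\<^sup>2 \<le> (P + R)\<^sup>2" by simp
  moreover have "P + R \<ge> 0" unfolding P_def R_def by simp
  ultimately have "\<bar>K\<bar> \<le> P + R" using abs_le_square_iff[of K "P+R"] by simp
  then have "\<bar>s * K\<bar> \<le> P + R" unfolding s_def by (simp add: abs_mult)
  then have "0 \<le> (P + R + s * K) / 2" by (simp add: abs_le_iff)
  then show "Im (\<Sum>i\<in>UNIV. \<Sum>j\<in>UNIV. cnj (v $ i) * Mu u a $ i $ j * v $ j) = 0 \<and>
      0 \<le> Re (\<Sum>i\<in>UNIV. \<Sum>j\<in>UNIV. cnj (v $ i) * Mu u a $ i $ j * v $ j)"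
    unfolding Q by simp
qed

lemma povm_Mu:
  assumes u: "u \<bullet> u \<le> 1"
  shows "povm 2 (Mu u)"
  unfolding povm_def
proof (intro conjI allI impI)
  show "(\<Sum>a<2. Mu u a) = mat 1"
    by (simp add: numeral_2_eq_2 Mu_def vec_eq_iff mat_def field_simps)
qed (use psd_Mu[OF u] in auto)

lemma Mu_diff: "Mu u 0 - Mu u 1 = PS u"
  by (simp add: Mu_def vec_eq_iff field_simps)

lemma tr_kron_diff: "trace (\<rho> ** kron A W) - trace (\<rho> ** kron B W) = trace (\<rho> ** kron (A - B) W)"
  by (simp add: trace_def kron_def matrix_matrix_mult_def sum_22 sum_2 algebra_simps)

lemma Lam_expand:
  "Re (trace (X ** PS w)) = (\<Sum>j\<in>UNIV. w$j * Re (trace (X ** pauli j)))"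
  by (simp add: trace_def matrix_matrix_mult_def sum_2 sum_3 PS_def pauli_def sigma1_def sigma2_def sigma3_def
      three_simps algebra_simps)

lemma Bloch:
  assumes "density_matrix S"
  shows "(\<Sum>j\<in>UNIV. (Re (trace (S ** pauli j)))\<^sup>2) \<le> 1"
proof -
  have P: "psd S" and tr: "trace S = 1" using assms by (auto simp: density_matrix_def)
  define Qf where "Qf v = (\<Sum>i\<in>UNIV. \<Sum>j\<in>UNIV. cnj (v $ i) * S $ i $ j * v $ j)" for v :: "complex^2"
  have Pv: "Im (Qf v) = 0 \<and> 0 \<le> Re (Qf v)" for v using P unfolding psd_def Qf_def by blast
  define p where "p = S$1$1"
  define q where "q = S$2$2"
  define c where "c = S$1$2"
  define d where "d = S$2$1"
  have Qf: "Qf v = cnj (v$1) * p * v$1 + cnj (v$1) * c * v$2 + cnj (v$2) * d * v$1 + cnj (v$2) * q * v$2" for v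
    unfolding Qf_def p_def q_def c_def d_def by (simp add: sum_2 algebra_simps)
  have 1: "Im p = 0" "0 \<le> Re p" using Pv[of "vector [1, 0]"] by (simp_all add: Qf)
  have 2: "Im q = 0" "0 \<le> Re q" using Pv[of "vector [0, 1]"] by (simp_all add: Qf)
  have 3: "Im d = - Im c" using Pv[of "vector [1, 1]"] 1 2 by (simp add: Qf)
  have 4: "Re d = Re c" using Pv[of "vector [1, \<i>]"] 1 2 by (simp add: Qf algebra_simps)
  have tr': "Re p + Re q = 1" using tr unfolding trace_def p_def q_def by (simp add: sum_2 complex_eq_iff)
  have 5: "0 \<le> Re p * (Re p * Re q - (Re c)\<^sup>2 - (Im c)\<^sup>2)"
    using Pv[of "vector [- c, p]"] 1 2 3 4 by (simp add: Qf power2_eq_square algebra_simps)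
  have 6: "0 \<le> Re q * (Re p * Re q - (Re c)\<^sup>2 - (Im c)\<^sup>2)"
    using Pv[of "vector [q, - cnj c]"] 1 2 3 4 by (simp add: Qf power2_eq_square algebra_simps)
  have "0 \<le> (Re p + Re q) * (Re p * Re q - (Re c)\<^sup>2 - (Im c)\<^sup>2)"
    using add_nonneg_nonneg[OF 5 6] by (simp add: algebra_simps)
  then have "0 \<le> Re p * Re q - (Re c)\<^sup>2 - (Im c)\<^sup>2" using tr' by simp
  then have 7: "(Re c)\<^sup>2 + (Im c)\<^sup>2 \<le> Re p * Re q" by simp
  have "(\<Sum>j\<in>UNIV. (Re (trace (S ** pauli j)))\<^sup>2) = (2 * Re c)\<^sup>2 + (2 * Im c)\<^sup>2 + (Re q - Re p)\<^sup>2"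
    using 3 4 unfolding p_def q_def c_def d_def
    by (simp add: trace_def matrix_matrix_mult_def sum_2 sum_3 pauli_def sigma1_def sigma2_def sigma3_def
      three_simps algebra_simps power2_eq_square)
  also have "\<dots> \<le> (Re p + Re q)\<^sup>2"
    using 7 by (simp add: power2_eq_square algebra_simps)
  finally show ?thesis using tr' by simp
qed


lemma poly3_coeffs:
  fixes p2 p1 p0 q2 q1 q0 :: real
  assumes "\<And>x. x^3 + p2 * x\<^sup>2 + p1 * x + p0 = x^3 + q2 * x\<^sup>2 + q1 * x + q0"
  shows "p2 = q2" "p1 = q1" "p0 = q0"
proof -
  have 0: "p0 = q0" using assms[of 0] by simp
  have 1: "p2 + p1 = q2 + q1" using assms[of 1] 0 by simp
  have m: "p2 - p1 = q2 - q1" using assms[of "-1"] 0 by simp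
  show "p2 = q2" "p1 = q1" "p0 = q0" using 0 1 m by linarith+
qed

lemma charpoly3:
  fixes A :: "real^3^3"
  shows "det (mat x - A) = x^3 + (- (A$1$1 + A$2$2 + A$3$3)) * x\<^sup>2
     + (A$1$1 * A$2$2 + A$1$1 * A$3$3 + A$2$2 * A$3$3 - A$1$2 * A$2$1 - A$1$3 * A$3$1 - A$2$3 * A$3$2) * x
     + (- det A)"
  by (simp add: det_3 mat_def power2_eq_square power3_eq_cube algebra_simps)

lemma sym_inner:
  fixes A :: "real^3^3"
  assumes sym: "\<And>i j. A$i$j = A$j$i"
  shows "(A *v x) \<bullet> y = x \<bullet> (A *v y)"
proof -
  have "transpose A = A" using sym by (simp add: transpose_def vec_eq_iff)
  then have "(A *v x) \<bullet> y = (x v* A) \<bullet> y" by (metis vector_transpose_matrix)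
  then show ?thesis by (simp add: dot_lmul_matrix)
qed

lemma eigvec_exists:
  fixes A :: "real^3^3"
  assumes "det (mat r - A) = 0"
  shows "\<exists>v. v \<bullet> v = 1 \<and> A *v v = r *\<^sub>R v"
proof -
  have "\<not> invertible (mat r - A)" using assms invertible_det_nz by blast
  then have "\<not> (\<exists>B. B ** (mat r - A) = mat 1)" using invertible_left_inverse by blast
  then obtain x where x: "(mat r - A) *v x = 0" "x \<noteq> 0"
    using matrix_left_invertible_ker by blast
  have mr: "mat r *v x = r *\<^sub>R x"
    by (simp add: vec_eq_iff forall_3 matrix_vector_mult_def mat_def sum_3)
  have Ax: "A *v x = r *\<^sub>R x" using x(1) mr by (simp add: matrix_vector_mult_diff_rdistrib)
  define v where "v = (1 / norm x) *\<^sub>R x"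
  have "v \<bullet> v = 1" using x(2) unfolding v_def by (simp add: dot_square_norm power2_eq_square)
  moreover have "A *v v = r *\<^sub>R v" unfolding v_def by (simp add: matrix_vector_mult_scaleR Ax)
  ultimately show ?thesis by blast
qed

lemma perp_cross:
  fixes u v y :: "real^3"
  assumes "u \<bullet> u = 1" "v \<bullet> v = 1" "u \<bullet> v = 0" "y \<bullet> u = 0" "y \<bullet> v = 0"
  shows "y = (y \<bullet> cross3 u v) *\<^sub>R cross3 u v"
proof -
  define n where "n = cross3 u v"
  have nn: "n \<bullet> n = 1"
    using norm_cross[of u v] assms unfolding n_def by (simp add: power2_norm_eq_inner)
  have "cross3 y n = 0" unfolding n_def using Lagrange[of y u v] assms by simp
  then have "cross3 n y = 0" by (metis cross_skew neg_equal_0_iff_equal)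
  then have "(n \<bullet> y)\<^sup>2 = (norm n * norm y)\<^sup>2" using norm_cross_dot[of n y] by simp
  then have ny: "(n \<bullet> y)\<^sup>2 = y \<bullet> y" using nn by (simp add: power_mult_distrib power2_norm_eq_inner)
  have "(y - (y \<bullet> n) *\<^sub>R n) \<bullet> (y - (y \<bullet> n) *\<^sub>R n) = y \<bullet> y - 2 * (y \<bullet> n)\<^sup>2 + (y \<bullet> n)\<^sup>2 * (n \<bullet> n)"
    by (simp add: inner_diff_left inner_diff_right inner_commute power2_eq_square algebra_simps)
  also have "\<dots> = 0" using ny nn by (simp add: inner_commute)
  finally have "y - (y \<bullet> n) *\<^sub>R n = 0" by simp
  then show ?thesis unfolding n_def by simp
qed

lemma spectral3:
  fixes A :: "real^3^3" and a b c :: real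
  assumes sym: "\<And>i j. A$i$j = A$j$i" and ord: "c \<le> b" "b \<le> a"
    and ch: "\<And>x. det (mat x - A) = (x - a) * (x - b) * (x - c)"
  shows "\<exists>u1 u2 u3 :: real^3. u1 \<bullet> u1 = 1 \<and> u2 \<bullet> u2 = 1 \<and> u3 \<bullet> u3 = 1 \<and>
     u1 \<bullet> u2 = 0 \<and> u1 \<bullet> u3 = 0 \<and> u2 \<bullet> u3 = 0 \<and>
     A *v u1 = c *\<^sub>R u1 \<and> A *v u2 = b *\<^sub>R u2 \<and> A *v u3 = a *\<^sub>R u3"
proof -
  have eq: "x^3 + (- (A$1$1 + A$2$2 + A$3$3)) * x\<^sup>2
     + (A$1$1 * A$2$2 + A$1$1 * A$3$3 + A$2$2 * A$3$3 - A$1$2 * A$2$1 - A$1$3 * A$3$1 - A$2$3 * A$3$2) * x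
     + (- det A) = x^3 + (- (a + b + c)) * x\<^sup>2 + (a*b + a*c + b*c) * x + (- (a*b*c))" for x
    using ch[of x] unfolding charpoly3 by (simp add: power2_eq_square power3_eq_cube algebra_simps)
  note co = poly3_coeffs[OF eq]
  have tr: "A$1$1 + A$2$2 + A$3$3 = a + b + c" using co(1) by simp
  have e2: "A$1$1 * A$2$2 + A$1$1 * A$3$3 + A$2$2 * A$3$3 - (A$1$2)\<^sup>2 - (A$1$3)\<^sup>2 - (A$2$3)\<^sup>2 = a*b + a*c + b*c"
    using co(2) sym[of 2 1] sym[of 3 1] sym[of 3 2] by (simp add: power2_eq_square)
  have eig: "\<exists>v. v \<bullet> v = 1 \<and> A *v v = r *\<^sub>R v" if "r = a \<or> r = b \<or> r = c" for r
    by (rule eigvec_exists) (use that ch in auto)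
  show ?thesis
  proof (cases "a = c")
    case True
    then have bb: "b = a" "c = a" using ord by auto
    have sq: "(A$1$1 - a)\<^sup>2 + (A$2$2 - a)\<^sup>2 + (A$3$3 - a)\<^sup>2 + 2 * (A$1$2)\<^sup>2 + 2 * (A$1$3)\<^sup>2 + 2 * (A$2$3)\<^sup>2 = 0"
    proof -
      have "(A$1$1 - a)\<^sup>2 + (A$2$2 - a)\<^sup>2 + (A$3$3 - a)\<^sup>2 + 2 * (A$1$2)\<^sup>2 + 2 * (A$1$3)\<^sup>2 + 2 * (A$2$3)\<^sup>2
          = (A$1$1 + A$2$2 + A$3$3)\<^sup>2 - 2 * (A$1$1 * A$2$2 + A$1$1 * A$3$3 + A$2$2 * A$3$3 - (A$1$2)\<^sup>2 - (A$1$3)\<^sup>2 - (A$2$3)\<^sup>2)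
            - 2 * a * (A$1$1 + A$2$2 + A$3$3) + 3 * a\<^sup>2"
        by (simp add: power2_eq_square algebra_simps)
      also have "\<dots> = 0" unfolding tr e2 bb by (simp add: power2_eq_square algebra_simps)
      finally show ?thesis .
    qed
    have z: "A$1$1 = a" "A$2$2 = a" "A$3$3 = a" "A$1$2 = 0" "A$1$3 = 0" "A$2$3 = 0"
    proof -
      have s0: "0 \<le> (A$1$1 - a)\<^sup>2" "0 \<le> (A$2$2 - a)\<^sup>2" "0 \<le> (A$3$3 - a)\<^sup>2"
        "0 \<le> (A$1$2)\<^sup>2" "0 \<le> (A$1$3)\<^sup>2" "0 \<le> (A$2$3)\<^sup>2" by simp_all
      have "(A$1$1 - a)\<^sup>2 = 0" "(A$2$2 - a)\<^sup>2 = 0" "(A$3$3 - a)\<^sup>2 = 0"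
        "(A$1$2)\<^sup>2 = 0" "(A$1$3)\<^sup>2 = 0" "(A$2$3)\<^sup>2 = 0" using sq s0 by linarith+
      then show "A$1$1 = a" "A$2$2 = a" "A$3$3 = a" "A$1$2 = 0" "A$1$3 = 0" "A$2$3 = 0" by simp_all
    qed
    have Ai: "A$i$j = (if i = j then a else 0)" for i j
      using z sym[of 2 1] sym[of 3 1] sym[of 3 2] exhaust_3[of i] exhaust_3[of j] by auto
    have Av: "A *v v = a *\<^sub>R v" for v
      by (simp add: vec_eq_iff forall_3 matrix_vector_mult_def Ai sum_3)
    show ?thesis
      by (rule exI[of _ "axis 1 1"], rule exI[of _ "axis 2 1"], rule exI[of _ "axis 3 1"])
         (simp add: Av bb inner_axis_axis)
  next
    case False
    obtain u3 where u3: "u3 \<bullet> u3 = 1" "A *v u3 = a *\<^sub>R u3" using eig[of a] by auto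
    obtain u1 where u1: "u1 \<bullet> u1 = 1" "A *v u1 = c *\<^sub>R u1" using eig[of c] by auto
    have "(A *v u1) \<bullet> u3 = u1 \<bullet> (A *v u3)" by (rule sym_inner[OF sym])
    then have "c * (u1 \<bullet> u3) = a * (u1 \<bullet> u3)" using u1 u3 by simp
    then have u13: "u1 \<bullet> u3 = 0" using False by simp
    define u2 where "u2 = cross3 u3 u1"
    have u22: "u2 \<bullet> u2 = 1"
      using norm_cross[of u3 u1] u1 u3 u13 unfolding u2_def by (simp add: power2_norm_eq_inner inner_commute)
    have u12: "u1 \<bullet> u2 = 0" unfolding u2_def by (simp add: dot_cross_self)
    have u23: "u2 \<bullet> u3 = 0" unfolding u2_def by (simp add: dot_cross_self inner_commute)
    have compl: "x = (x \<bullet> u1) *\<^sub>R u1 + (x \<bullet> u2) *\<^sub>R u2 + (x \<bullet> u3) *\<^sub>R u3" for x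
    proof -
      define y where "y = x - (x \<bullet> u1) *\<^sub>R u1 - (x \<bullet> u3) *\<^sub>R u3"
      have u31: "u3 \<bullet> u1 = 0" using u13 by (simp add: inner_commute)
      have "y \<bullet> u3 = 0" "y \<bullet> u1 = 0" unfolding y_def using u1 u3 u13 u31
        by (simp_all add: inner_diff_left)
      then have "y = (y \<bullet> u2) *\<^sub>R u2" unfolding u2_def
        by (intro perp_cross) (use u1 u3 u13 in \<open>simp_all add: inner_commute\<close>)
      moreover have "y \<bullet> u2 = x \<bullet> u2"
      proof -
        have u32: "u3 \<bullet> u2 = 0" using u23 by (simp add: inner_commute)
        show ?thesis unfolding y_def using u12 u32 by (simp add: inner_diff_left)
      qed
      ultimately have yy: "y = (x \<bullet> u2) *\<^sub>R u2" by simp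
      have "x = y + (x \<bullet> u1) *\<^sub>R u1 + (x \<bullet> u3) *\<^sub>R u3" unfolding y_def by simp
      then show ?thesis unfolding yy by (simp add: algebra_simps)
    qed
    define \<mu> where "\<mu> = (A *v u2) \<bullet> u2"
    have Au2: "A *v u2 = \<mu> *\<^sub>R u2"
    proof -
      have "(A *v u2) \<bullet> u1 = 0" using sym_inner[OF sym, of u2 u1] u1 u12 by (simp add: inner_commute)
      moreover have "(A *v u2) \<bullet> u3 = 0" using sym_inner[OF sym, of u2 u3] u3 u23 by simp
      ultimately show ?thesis using compl[of "A *v u2"] unfolding \<mu>_def by simp
    qed
    have delta: "u1$i * u1$j + u2$i * u2$j + u3$i * u3$j = (if i = j then 1 else 0)" for i j
    proof -
      have "axis i 1 $ j = ((axis i 1) \<bullet> u1) * u1$j + ((axis i 1) \<bullet> u2) * u2$j + ((axis i 1) \<bullet> u3) * u3$j"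
        using arg_cong[OF compl[of "axis i (1::real)"], of "\<lambda>v. v $ j"] by simp
      then show ?thesis by (simp add: inner_axis') (auto simp: axis_def)
    qed
    have "u1 \<bullet> (A *v u1) + u2 \<bullet> (A *v u2) + u3 \<bullet> (A *v u3)
        = (\<Sum>i\<in>UNIV. \<Sum>j\<in>UNIV. A$i$j * (u1$i * u1$j + u2$i * u2$j + u3$i * u3$j))"
      by (simp add: inner_vec_def matrix_vector_mult_def sum_distrib_left sum.distrib algebra_simps)
    also have "\<dots> = A$1$1 + A$2$2 + A$3$3"
      by (simp add: delta sum_3 if_distrib cong: if_cong)
    finally have "c + \<mu> + a = a + b + c" using u1 u3 Au2 u22 tr by simp
    then have "\<mu> = b" by simp
    then show ?thesis using u1 u3 u22 u12 u13 u23 Au2 by blast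
  qed
qed


lemma trP_scaleR: "Re (trace ((c *\<^sub>R X) ** P)) = c * Re (trace ((X::cmat2) ** P))"
  by (simp add: trace_def matrix_matrix_mult_def sum_2 algebra_simps)

lemma linear_trP: "linear (\<lambda>X::cmat2. Re (trace (X ** (P::cmat2))))"
proof (rule linearI)
  fix X Y :: cmat2 and c :: real
  show "Re (trace ((X + Y) ** P)) = Re (trace (X ** P)) + Re (trace (Y ** P))"
    by (simp add: trace_def matrix_matrix_mult_def sum_2 algebra_simps)
  show "Re (trace ((c *\<^sub>R X) ** P)) = c *\<^sub>R Re (trace (X ** P))"
    using trP_scaleR by simp
qed

lemma bl_trP: "bounded_linear (\<lambda>X::cmat2. Re (trace (X ** (P::cmat2))))"
  using linear_trP by (simp add: linear_conv_bounded_linear)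

lemma meas_trP:
  fixes P :: cmat2 and S :: "'l \<Rightarrow> cmat2"
  assumes "S \<in> borel_measurable \<mu>"
  shows "(\<lambda>l. Re (trace (S l ** P))) \<in> borel_measurable \<mu>"
proof -
  have "continuous_on UNIV (\<lambda>X::cmat2. Re (trace (X ** P)))"
    using linear_continuous_on[OF bl_trP] .
  then have "(\<lambda>X::cmat2. Re (trace (X ** P))) \<in> borel_measurable borel"
    by (rule borel_measurable_continuous_onI)
  from measurable_compose[OF assms this] show ?thesis .
qed

lemma lhs_bound:
  fixes \<mu> :: "'l measure"
  assumes L: "lhs_model \<mu> S p \<rho>" and u: "u \<bullet> u \<le> 1"
  shows "u \<bullet> (corr_matrix \<rho> *v w) \<le> (\<integral>l. \<bar>Re (trace (S l ** PS w))\<bar> \<partial>\<mu>)"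
proof -
  have P: "prob_space \<mu>" and Sm: "S \<in> borel_measurable \<mu>"
    and dens: "\<And>l. l \<in> space \<mu> \<Longrightarrow> density_matrix (S l)"
    and pv: "povm 2 (Mu u) \<longrightarrow> (\<forall>l\<in>space \<mu>. (\<forall>a<2. 0 \<le> p 2 (Mu u) a l) \<and> (\<Sum>a<2. p 2 (Mu u) a l) = 1) \<and>
        (\<forall>a<2. p 2 (Mu u) a \<in> borel_measurable \<mu> \<and>
               has_bochner_integral \<mu> (\<lambda>l. p 2 (Mu u) a l *\<^sub>R S l) (assemblage \<rho> (Mu u) a))"
    using L unfolding lhs_model_def by blast+
  interpret prob_space \<mu> by (rule P)
  note pv = pv[rule_format, OF povm_Mu[OF u]]
  define p0 where "p0 = p 2 (Mu u) 0"
  define p1 where "p1 = p 2 (Mu u) 1"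
  define \<Lambda> where "\<Lambda> X = Re (trace (X ** PS w))" for X
  have bl: "bounded_linear \<Lambda>" unfolding \<Lambda>_def by (rule bl_trP)
  have hb: "has_bochner_integral \<mu> (\<lambda>l. pa l *\<^sub>R S l) (assemblage \<rho> (Mu u) a)" if "a < 2" "pa = p 2 (Mu u) a" for a pa
    using pv that by blast
  have hbL: "has_bochner_integral \<mu> (\<lambda>l. pa l * \<Lambda> (S l)) (\<Lambda> (assemblage \<rho> (Mu u) a))" if "a < 2" "pa = p 2 (Mu u) a" for a pa
  proof -
    have "has_bochner_integral \<mu> (\<lambda>l. \<Lambda> (pa l *\<^sub>R S l)) (\<Lambda> (assemblage \<rho> (Mu u) a))"
      by (rule has_bochner_integral_bounded_linear[OF bl hb[OF that]])
    moreover have "\<Lambda> (pa l *\<^sub>R S l) = pa l * \<Lambda> (S l)" for l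
      unfolding \<Lambda>_def by (rule trP_scaleR)
    ultimately show ?thesis by simp
  qed
  have d: "has_bochner_integral \<mu> (\<lambda>l. p0 l * \<Lambda> (S l) - p1 l * \<Lambda> (S l))
     (\<Lambda> (assemblage \<rho> (Mu u) 0) - \<Lambda> (assemblage \<rho> (Mu u) 1))"
    by (rule has_bochner_integral_diff; rule hbL) (auto simp: p0_def p1_def)
  have "\<Lambda> (assemblage \<rho> (Mu u) 0) - \<Lambda> (assemblage \<rho> (Mu u) 1) = u \<bullet> (corr_matrix \<rho> *v w)"
  proof -
    have "\<Lambda> (assemblage \<rho> (Mu u) 0) - \<Lambda> (assemblage \<rho> (Mu u) 1)
       = Re (trace (\<rho> ** kron (Mu u 0) (PS w)) - trace (\<rho> ** kron (Mu u 1) (PS w)))"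
      unfolding \<Lambda>_def assemblage_def L1 by simp
    also have "\<dots> = Re (trace (\<rho> ** kron (PS u) (PS w)))"
      unfolding tr_kron_diff Mu_diff ..
    finally show ?thesis using L2 by simp
  qed
  with d have eq: "u \<bullet> (corr_matrix \<rho> *v w) = (\<integral>l. p0 l * \<Lambda> (S l) - p1 l * \<Lambda> (S l) \<partial>\<mu>)"
    by (simp add: has_bochner_integral_iff)
  have Lm: "(\<lambda>l. \<Lambda> (S l)) \<in> borel_measurable \<mu>" unfolding \<Lambda>_def by (rule meas_trP[OF Sm])
  have Lb: "\<bar>\<Lambda> (S l)\<bar> \<le> \<bar>w$0\<bar> + \<bar>w$1\<bar> + \<bar>w$2\<bar>" if l: "l \<in> space \<mu>" for l
  proof -
    have B: "(\<Sum>j\<in>UNIV. (Re (trace (S l ** pauli j)))\<^sup>2) \<le> 1" by (rule Bloch[OF dens[OF l]])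
    have b1: "\<bar>Re (trace (S l ** pauli j))\<bar> \<le> 1" for j
    proof -
      have "(Re (trace (S l ** pauli j)))\<^sup>2 \<le> (\<Sum>j\<in>UNIV. (Re (trace (S l ** pauli j)))\<^sup>2)"
        by (rule member_le_sum) auto
      then have "(Re (trace (S l ** pauli j)))\<^sup>2 \<le> 1\<^sup>2" using B by simp
      then show ?thesis using abs_le_square_iff by (metis abs_one)
    qed
    have "\<Lambda> (S l) = (\<Sum>j\<in>UNIV. w$j * Re (trace (S l ** pauli j)))" unfolding \<Lambda>_def by (rule Lam_expand)
    also have "\<dots> = w$1 * Re (trace (S l ** pauli 1)) + w$2 * Re (trace (S l ** pauli 2)) + w$0 * Re (trace (S l ** pauli 0))"
      by (simp add: sum_3 three_simps)
    finally have "\<bar>\<Lambda> (S l)\<bar> \<le> \<bar>w$1\<bar> * \<bar>Re (trace (S l ** pauli 1))\<bar> + \<bar>w$2\<bar> * \<bar>Re (trace (S l ** pauli 2))\<bar> + \<bar>w$0\<bar> * \<bar>Re (trace (S l ** pauli 0))\<bar>"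
      by (simp add: abs_mult[symmetric])
    also have "\<dots> \<le> \<bar>w$1\<bar> * 1 + \<bar>w$2\<bar> * 1 + \<bar>w$0\<bar> * 1"
      by (intro add_mono mult_left_mono b1) auto
    finally show ?thesis by simp
  qed
  have Li: "integrable \<mu> (\<lambda>l. \<bar>\<Lambda> (S l)\<bar>)"
    by (rule integrable_const_bound[where B="\<bar>w$0\<bar> + \<bar>w$1\<bar> + \<bar>w$2\<bar>"]) (use Lb Lm in auto)
  have "(\<integral>l. p0 l * \<Lambda> (S l) - p1 l * \<Lambda> (S l) \<partial>\<mu>) \<le> (\<integral>l. \<bar>\<Lambda> (S l)\<bar> \<partial>\<mu>)"
  proof (rule integral_mono)
    show "integrable \<mu> (\<lambda>l. p0 l * \<Lambda> (S l) - p1 l * \<Lambda> (S l))" using d by (simp add: has_bochner_integral_iff)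
    show "integrable \<mu> (\<lambda>l. \<bar>\<Lambda> (S l)\<bar>)" by (rule Li)
    fix l assume l: "l \<in> space \<mu>"
    have "0 \<le> p0 l" "0 \<le> p1 l" "p0 l + p1 l = 1"
      using pv l unfolding p0_def p1_def by (auto simp: numeral_2_eq_2)
    then have "\<bar>p0 l - p1 l\<bar> \<le> 1" by linarith
    then have "(p0 l - p1 l) * \<Lambda> (S l) \<le> 1 * \<bar>\<Lambda> (S l)\<bar>"
      by (metis abs_ge_self abs_mult abs_ge_zero mult_right_mono order_trans)
    then show "p0 l * \<Lambda> (S l) - p1 l * \<Lambda> (S l) \<le> \<bar>\<Lambda> (S l)\<bar>" by (simp add: algebra_simps)
  qed
  then show ?thesis using eq unfolding \<Lambda>_def by simp
qed


lemma normT_sq: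
  fixes T :: "real^3^3"
  shows "(norm (T *v v))\<^sup>2 = v \<bullet> ((transpose T ** T) *v v)"
proof -
  have "(norm (T *v v))\<^sup>2 = (T *v v) \<bullet> (T *v v)" by (simp add: power2_norm_eq_inner)
  also have "\<dots> = (v v* transpose T) \<bullet> (T *v v)" by simp
  also have "\<dots> = v \<bullet> (transpose T *v (T *v v))" by (rule dot_lmul_matrix)
  also have "\<dots> = v \<bullet> ((transpose T ** T) *v v)" by (simp add: matrix_vector_mul_assoc)
  finally show ?thesis .
qed

theorem corollary2:
  fixes \<rho> :: cmat4 and \<mu> :: "'l measure" and S :: "'l \<Rightarrow> cmat2"
    and p :: "nat \<Rightarrow> (nat \<Rightarrow> cmat2) \<Rightarrow> nat \<Rightarrow> 'l \<Rightarrow> real"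
    and \<tau>1 \<tau>2 \<tau>3 :: real
  assumes "density_matrix \<rho>"
    and "singular_values3 (corr_matrix \<rho>) \<tau>1 \<tau>2 \<tau>3"
    and "lhs_model \<mu> S p \<rho>"
  shows "R_G (\<tau>3\<^sup>2) (\<tau>2\<^sup>2) (\<tau>1\<^sup>2) \<le> 1 / 2"
proof -
  note L = assms(3)
  have P: "prob_space \<mu>" and Sm: "S \<in> borel_measurable \<mu>"
    and dens: "\<And>l. l \<in> space \<mu> \<Longrightarrow> density_matrix (S l)"
    using L unfolding lhs_model_def by blast+
  interpret prob_space \<mu> by (rule P)
  define T where "T = corr_matrix \<rho>"
  have sv: "\<tau>1 \<ge> \<tau>2" "\<tau>2 \<ge> \<tau>3" "\<tau>3 \<ge> 0"
    and ch: "\<And>x. det (mat x - transpose T ** T) = (x - \<tau>1\<^sup>2) * (x - \<tau>2\<^sup>2) * (x - \<tau>3\<^sup>2)"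
    using assms(2) unfolding singular_values3_def T_def by auto
  define A where "A = transpose T ** T"
  have symA: "A$i$j = A$j$i" for i j
    unfolding A_def by (simp add: matrix_matrix_mult_def transpose_def mult.commute)
  have o1: "\<tau>3\<^sup>2 \<le> \<tau>2\<^sup>2" "\<tau>2\<^sup>2 \<le> \<tau>1\<^sup>2" using sv by (auto intro!: power_mono)
  obtain u1 u2 u3 :: "real^3" where on: "u1 \<bullet> u1 = 1" "u2 \<bullet> u2 = 1" "u3 \<bullet> u3 = 1"
     "u1 \<bullet> u2 = 0" "u1 \<bullet> u3 = 0" "u2 \<bullet> u3 = 0"
     and ev: "A *v u1 = \<tau>3\<^sup>2 *\<^sub>R u1" "A *v u2 = \<tau>2\<^sup>2 *\<^sub>R u2" "A *v u3 = \<tau>1\<^sup>2 *\<^sub>R u3"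
    using spectral3[of A "\<tau>3\<^sup>2" "\<tau>2\<^sup>2" "\<tau>1\<^sup>2", OF symA o1] ch unfolding A_def by blast
  have on': "u2 \<bullet> u1 = 0" "u3 \<bullet> u1 = 0" "u3 \<bullet> u2 = 0" using on by (simp_all add: inner_commute)
  define W where "W z1 z2 z3 = z1 *\<^sub>R u1 + z2 *\<^sub>R u2 + z3 *\<^sub>R u3" for z1 z2 z3
  have normW: "norm (T *v W z1 z2 z3) = sqrt (\<tau>3\<^sup>2 * z1\<^sup>2 + \<tau>2\<^sup>2 * z2\<^sup>2 + \<tau>1\<^sup>2 * z3\<^sup>2)" for z1 z2 z3
  proof -
    have "(norm (T *v W z1 z2 z3))\<^sup>2 = W z1 z2 z3 \<bullet> (A *v W z1 z2 z3)"
      unfolding A_def by (rule normT_sq)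
    also have "A *v W z1 z2 z3 = (z1 * \<tau>3\<^sup>2) *\<^sub>R u1 + (z2 * \<tau>2\<^sup>2) *\<^sub>R u2 + (z3 * \<tau>1\<^sup>2) *\<^sub>R u3"
      unfolding W_def by (simp add: matrix_vector_right_distrib matrix_vector_mult_scaleR ev)
    also have "W z1 z2 z3 \<bullet> \<dots> = \<tau>3\<^sup>2 * z1\<^sup>2 + \<tau>2\<^sup>2 * z2\<^sup>2 + \<tau>1\<^sup>2 * z3\<^sup>2"
      unfolding W_def by (simp add: inner_add_left inner_add_right on on' power2_eq_square algebra_simps)
    finally show ?thesis by (metis norm_ge_zero real_sqrt_abs abs_of_nonneg)
  qed
  define s where "s l = (\<chi> j. Re (trace (S l ** pauli j)))" for l
  have sdot: "s l \<bullet> w = Re (trace (S l ** PS w))" for l w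
    unfolding s_def Lam_expand by (simp add: inner_vec_def mult.commute)
  have key1: "norm (T *v w) \<le> (\<integral>l. \<bar>s l \<bullet> w\<bar> \<partial>\<mu>)" for w
  proof (cases "T *v w = 0")
    case True
    then show ?thesis by (simp add: integral_nonneg_AE)
  next
    case False
    define u where "u = (1 / norm (T *v w)) *\<^sub>R (T *v w)"
    have uu: "u \<bullet> u = 1" using False unfolding u_def by (simp add: dot_square_norm power2_eq_square)
    have "u \<bullet> (T *v w) = norm (T *v w)"
      using False unfolding u_def by (simp add: dot_square_norm power2_eq_square)
    moreover have "u \<bullet> (T *v w) \<le> (\<integral>l. \<bar>Re (trace (S l ** PS w))\<bar> \<partial>\<mu>)"
      unfolding T_def by (rule lhs_bound[OF L]) (simp add: uu)
    ultimately show ?thesis by (simp add: sdot)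
  qed
  define a1 where "a1 l = s l \<bullet> u1" for l
  define a2 where "a2 l = s l \<bullet> u2" for l
  define a3 where "a3 l = s l \<bullet> u3" for l
  have am: "a1 \<in> borel_measurable \<mu>" "a2 \<in> borel_measurable \<mu>" "a3 \<in> borel_measurable \<mu>"
    unfolding a1_def a2_def a3_def sdot by (rule meas_trP[OF Sm])+
  have ab: "(a1 l)\<^sup>2 + (a2 l)\<^sup>2 + (a3 l)\<^sup>2 \<le> 1" if l: "l \<in> space \<mu>" for l
  proof -
    define x where "x = s l"
    define y where "y = x - W (x \<bullet> u1) (x \<bullet> u2) (x \<bullet> u3)"
    have "0 \<le> y \<bullet> y" by simp
    also have "y \<bullet> y = x \<bullet> x - ((x \<bullet> u1)\<^sup>2 + (x \<bullet> u2)\<^sup>2 + (x \<bullet> u3)\<^sup>2)"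
      unfolding y_def W_def
      by (simp add: inner_add_left inner_add_right inner_diff_left inner_diff_right on on'
          power2_eq_square inner_commute algebra_simps)
    finally have "(x \<bullet> u1)\<^sup>2 + (x \<bullet> u2)\<^sup>2 + (x \<bullet> u3)\<^sup>2 \<le> x \<bullet> x" by simp
    also have "x \<bullet> x = (\<Sum>j\<in>UNIV. (Re (trace (S l ** pauli j)))\<^sup>2)"
      unfolding x_def s_def by (simp add: inner_vec_def power2_eq_square)
    also have "\<dots> \<le> 1" by (rule Bloch[OF dens[OF l]])
    finally show ?thesis unfolding a1_def a2_def a3_def x_def .
  qed
  note FB = fubini_box[OF P am ab]
  define B where "B = cbox (0::real, 0::real) (2 * pi, pi)"
  have RG: "R_G (\<tau>3\<^sup>2) (\<tau>2\<^sup>2) (\<tau>1\<^sup>2) = 1 / (4 * pi) * integral B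
      (\<lambda>t. sqrt (\<tau>3\<^sup>2 * (sin (snd t))\<^sup>2 * (cos (fst t))\<^sup>2 + \<tau>2\<^sup>2 * (sin (snd t))\<^sup>2 * (sin (fst t))\<^sup>2
                        + \<tau>1\<^sup>2 * (cos (snd t))\<^sup>2) * sin (snd t))"
    unfolding R_G_def B_def by (simp add: case_prod_beta')
  have "integral B
      (\<lambda>t. sqrt (\<tau>3\<^sup>2 * (sin (snd t))\<^sup>2 * (cos (fst t))\<^sup>2 + \<tau>2\<^sup>2 * (sin (snd t))\<^sup>2 * (sin (fst t))\<^sup>2
                        + \<tau>1\<^sup>2 * (cos (snd t))\<^sup>2) * sin (snd t))
     \<le> integral B (\<lambda>t. \<integral>l. \<bar>dz (a1 l) (a2 l) (a3 l) (fst t) (snd t)\<bar> * sin (snd t) \<partial>\<mu>)"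
  proof (rule integral_le)
    show "(\<lambda>t. sqrt (\<tau>3\<^sup>2 * (sin (snd t))\<^sup>2 * (cos (fst t))\<^sup>2 + \<tau>2\<^sup>2 * (sin (snd t))\<^sup>2 * (sin (fst t))\<^sup>2
                        + \<tau>1\<^sup>2 * (cos (snd t))\<^sup>2) * sin (snd t)) integrable_on B"
      unfolding B_def by (intro integrable_continuous continuous_intros)
    show "(\<lambda>t. \<integral>l. \<bar>dz (a1 l) (a2 l) (a3 l) (fst t) (snd t)\<bar> * sin (snd t) \<partial>\<mu>) integrable_on B"
      unfolding B_def by (rule FB(1))
  next
    fix t :: "real \<times> real" assume t: "t \<in> B"
    obtain \<phi> \<theta> where t': "t = (\<phi>, \<theta>)" by (cases t)
    have s0: "sin \<theta> \<ge> 0" using t unfolding t' B_def by (auto intro!: sin_ge_zero simp: cbox_Pair_iff)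
    define Z where "Z = W (sin \<theta> * cos \<phi>) (sin \<theta> * sin \<phi>) (cos \<theta>)"
    have "sqrt (\<tau>3\<^sup>2 * (sin \<theta>)\<^sup>2 * (cos \<phi>)\<^sup>2 + \<tau>2\<^sup>2 * (sin \<theta>)\<^sup>2 * (sin \<phi>)\<^sup>2 + \<tau>1\<^sup>2 * (cos \<theta>)\<^sup>2)
        = norm (T *v Z)"
      unfolding Z_def normW by (simp add: power_mult_distrib algebra_simps)
    also have "\<dots> \<le> (\<integral>l. \<bar>s l \<bullet> Z\<bar> \<partial>\<mu>)" by (rule key1)
    also have "(\<integral>l. \<bar>s l \<bullet> Z\<bar> \<partial>\<mu>) = (\<integral>l. \<bar>dz (a1 l) (a2 l) (a3 l) \<phi> \<theta>\<bar> \<partial>\<mu>)"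
      unfolding Z_def W_def a1_def a2_def a3_def dz_def
      by (simp add: inner_add_right algebra_simps)
    finally have "sqrt (\<tau>3\<^sup>2 * (sin \<theta>)\<^sup>2 * (cos \<phi>)\<^sup>2 + \<tau>2\<^sup>2 * (sin \<theta>)\<^sup>2 * (sin \<phi>)\<^sup>2 + \<tau>1\<^sup>2 * (cos \<theta>)\<^sup>2) * sin \<theta>
        \<le> (\<integral>l. \<bar>dz (a1 l) (a2 l) (a3 l) \<phi> \<theta>\<bar> \<partial>\<mu>) * sin \<theta>"
      using s0 by (rule mult_right_mono)
    then show "sqrt (\<tau>3\<^sup>2 * (sin (snd t))\<^sup>2 * (cos (fst t))\<^sup>2 + \<tau>2\<^sup>2 * (sin (snd t))\<^sup>2 * (sin (fst t))\<^sup>2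
                        + \<tau>1\<^sup>2 * (cos (snd t))\<^sup>2) * sin (snd t)
       \<le> (\<integral>l. \<bar>dz (a1 l) (a2 l) (a3 l) (fst t) (snd t)\<bar> * sin (snd t) \<partial>\<mu>)"
      unfolding t' by simp
  qed
  also have "integral B (\<lambda>t. \<integral>l. \<bar>dz (a1 l) (a2 l) (a3 l) (fst t) (snd t)\<bar> * sin (snd t) \<partial>\<mu>) \<le> 2 * pi"
    unfolding B_def by (rule FB(2))
  finally have I: "integral B
      (\<lambda>t. sqrt (\<tau>3\<^sup>2 * (sin (snd t))\<^sup>2 * (cos (fst t))\<^sup>2 + \<tau>2\<^sup>2 * (sin (snd t))\<^sup>2 * (sin (fst t))\<^sup>2
                        + \<tau>1\<^sup>2 * (cos (snd t))\<^sup>2) * sin (snd t)) \<le> 2 * pi" .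
  have "1 / (4 * pi) * integral B
      (\<lambda>t. sqrt (\<tau>3\<^sup>2 * (sin (snd t))\<^sup>2 * (cos (fst t))\<^sup>2 + \<tau>2\<^sup>2 * (sin (snd t))\<^sup>2 * (sin (fst t))\<^sup>2
                        + \<tau>1\<^sup>2 * (cos (snd t))\<^sup>2) * sin (snd t)) \<le> 1 / (4 * pi) * (2 * pi)"
    by (rule mult_left_mono[OF I]) simp
  then show ?thesis unfolding RG by simp
qed

end
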